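(* Let $\Omega\subset\mathbb{R}^n$ be an open bounded connected domain satisfying $\operatorname{Cut}(\Omega)=M(\Omega)$. Then the function $$\phi_\Omega(x)=c_0\left[\rho_\Omega^{4/3}-(\rho_\Omega-d_{\partial\Omega}(x))^{4/3}\right],\qquad c_0=\frac{3^{4/3}}{4},\quad x\in\overline\Omega,$$ is the unique viscosity solution to the Dirichlet problem $$-\Delta_\infty u=1\ \text{in }\Omega,\qquad u=0\ \text{on }\partial\Omega.$$ Moreover, if $\partial\Omega$ is of class $C^1$, then $\phi_\Omega$ is also the unique viscosity solution to the overdetermined problem $$-\Delta_\infty u=1\ \text{in }\Omega,\qquad u=0\ \text{on }\partial\Omega,\qquad \frac{\partial u}{\partial\nu}=c\ \text{on }\partial\Omega,$$ with $c=(3\rho_\Omega)^{1/3}$, where $\nu$ is the unit inner normal to $\partial\Omega$.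
   Context: $d_{\partial\Omega}(x)=\min_{y\in\partial\Omega}|x-y|$ for $x\in\overline\Omega$; $\rho_\Omega=\max_{\overline\Omega}d_{\partial\Omega}$. The singular set $\Sigma(\Omega)$ is the set of points of $\Omega$ where $d_{\partial\Omega}$ is not differentiable; the cut locus is $\operatorname{Cut}(\Omega)=\overline{\Sigma(\Omega)}$; the high ridge is $M(\Omega)=\{x\in\overline\Omega: d_{\partial\Omega}(x)=\rho_\Omega\}$. The infinity Laplacian is $\Delta_\infty\varphi=\langle D^2\varphi\,\nabla\varphi,\nabla\varphi\rangle$. A function $u\in C^0(\Omega)$ is a viscosity subsolution of $-\Delta_\infty u=1$ if $-\Delta_\infty\varphi(x_0)\le 1$ whenever $\varphi\in C^2(\Omega)$ and $\varphi-u$ has a local minimum at $x_0$; a viscosity supersolution if $-\Delta_\infty\varphi(x_0)\ge1$ whenever $\varphi\in C^2(\Omega)$ and $\varphi-u$ has a local maximum at $x_0$; a viscosity solution if both. A viscosity solution of the Dirichlet problem is $u\in C^0(\overline\Omega)$ with $u=0$ on $\partial\Omega$ that is a viscosity solution of the equation in $\Omega$. *)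

theory Defs
  imports "HOL-Analysis.Analysis"
begin

definition dist_bd :: "('a::euclidean_space) set \<Rightarrow> 'a \<Rightarrow> real" where
  "dist_bd \<Omega> x = infdist x (frontier \<Omega>)"

definition inradius :: "('a::euclidean_space) set \<Rightarrow> real" where
  "inradius \<Omega> = Sup (dist_bd \<Omega> ` closure \<Omega>)"

definition singular_set :: "('a::euclidean_space) set \<Rightarrow> 'a set" where
  "singular_set \<Omega> = {x \<in> \<Omega>. \<not> (dist_bd \<Omega> differentiable (at x))}"

definition cut_locus :: "('a::euclidean_space) set \<Rightarrow> 'a set" where
  "cut_locus \<Omega> = closure (singular_set \<Omega>)"

definition high_ridge :: "('a::euclidean_space) set \<Rightarrow> 'a set" where
  "high_ridge \<Omega> = {x \<in> closure \<Omega>. dist_bd \<Omega> x = inradius \<Omega>}"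

definition C2_on :: "('a::euclidean_space) set \<Rightarrow> ('a \<Rightarrow> real) \<Rightarrow> ('a \<Rightarrow> 'a) \<Rightarrow> ('a \<Rightarrow> 'a \<Rightarrow> 'a) \<Rightarrow> bool" where
  "C2_on \<Omega> \<phi> g H \<longleftrightarrow>
     (\<forall>x\<in>\<Omega>. (\<phi> has_derivative (\<lambda>h. g x \<bullet> h)) (at x)) \<and>
     (\<forall>x\<in>\<Omega>. (g has_derivative H x) (at x)) \<and>
     (\<forall>h. continuous_on \<Omega> (\<lambda>x. H x h))"

definition inf_lap :: "('a::euclidean_space \<Rightarrow> 'a) \<Rightarrow> ('a \<Rightarrow> 'a \<Rightarrow> 'a) \<Rightarrow> 'a \<Rightarrow> real" where
  "inf_lap g H x = H x (g x) \<bullet> g x"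

definition local_min_at :: "('a::euclidean_space) set \<Rightarrow> ('a \<Rightarrow> real) \<Rightarrow> 'a \<Rightarrow> bool" where
  "local_min_at \<Omega> f x0 \<longleftrightarrow> (\<exists>e>0. \<forall>y\<in>\<Omega> \<inter> ball x0 e. f x0 \<le> f y)"

definition local_max_at :: "('a::euclidean_space) set \<Rightarrow> ('a \<Rightarrow> real) \<Rightarrow> 'a \<Rightarrow> bool" where
  "local_max_at \<Omega> f x0 \<longleftrightarrow> (\<exists>e>0. \<forall>y\<in>\<Omega> \<inter> ball x0 e. f y \<le> f x0)"

definition visc_subsol :: "('a::euclidean_space) set \<Rightarrow> ('a \<Rightarrow> real) \<Rightarrow> bool" where
  "visc_subsol \<Omega> u \<longleftrightarrow> continuous_on \<Omega> u \<and>
     (\<forall>\<phi> g H x0. C2_on \<Omega> \<phi> g H \<and> x0 \<in> \<Omega> \<and> local_min_at \<Omega> (\<lambda>x. \<phi> x - u x) x0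
        \<longrightarrow> - inf_lap g H x0 \<le> 1)"

definition visc_supersol :: "('a::euclidean_space) set \<Rightarrow> ('a \<Rightarrow> real) \<Rightarrow> bool" where
  "visc_supersol \<Omega> u \<longleftrightarrow> continuous_on \<Omega> u \<and>
     (\<forall>\<phi> g H x0. C2_on \<Omega> \<phi> g H \<and> x0 \<in> \<Omega> \<and> local_max_at \<Omega> (\<lambda>x. \<phi> x - u x) x0
        \<longrightarrow> - inf_lap g H x0 \<ge> 1)"

definition visc_sol :: "('a::euclidean_space) set \<Rightarrow> ('a \<Rightarrow> real) \<Rightarrow> bool" where
  "visc_sol \<Omega> u \<longleftrightarrow> visc_subsol \<Omega> u \<and> visc_supersol \<Omega> u"

definition dirichlet_visc_sol :: "('a::euclidean_space) set \<Rightarrow> ('a \<Rightarrow> real) \<Rightarrow> bool" where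
  "dirichlet_visc_sol \<Omega> u \<longleftrightarrow> continuous_on (closure \<Omega>) u \<and> (\<forall>x\<in>frontier \<Omega>. u x = 0) \<and> visc_sol \<Omega> u"

text \<open>nu is the unit inner normal of Omega at the boundary point p, witnessed by a local C^1
  defining function psi with non-vanishing gradient: near p, Omega = {psi > 0}.\<close>
definition inner_normal :: "('a::euclidean_space) set \<Rightarrow> 'a \<Rightarrow> 'a \<Rightarrow> bool" where
  "inner_normal \<Omega> p \<nu> \<longleftrightarrow> p \<in> frontier \<Omega> \<and>
     (\<exists>r>0. \<exists>\<psi> D\<psi>.
        (\<forall>x\<in>ball p r. (\<psi> has_derivative (\<lambda>h. D\<psi> x \<bullet> h)) (at x)) \<and>
        continuous_on (ball p r) D\<psi> \<and>
        (\<forall>x\<in>ball p r. D\<psi> x \<noteq> 0) \<and>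
        \<Omega> \<inter> ball p r = {x \<in> ball p r. \<psi> x > 0} \<and>
        \<nu> = D\<psi> p /\<^sub>R norm (D\<psi> p))"

definition C1_boundary :: "('a::euclidean_space) set \<Rightarrow> bool" where
  "C1_boundary \<Omega> \<longleftrightarrow> (\<forall>p\<in>frontier \<Omega>. \<exists>\<nu>. inner_normal \<Omega> p \<nu>)"

definition normal_deriv_eq :: "('a::euclidean_space) set \<Rightarrow> ('a \<Rightarrow> real) \<Rightarrow> real \<Rightarrow> bool" where
  "normal_deriv_eq \<Omega> u c \<longleftrightarrow> (\<forall>p \<nu>. inner_normal \<Omega> p \<nu> \<longrightarrow>
      ((\<lambda>t. (u (p + t *\<^sub>R \<nu>) - u p) / t) \<longlongrightarrow> c) (at_right 0))"

definition overdet_visc_sol :: "('a::euclidean_space) set \<Rightarrow> ('a \<Rightarrow> real) \<Rightarrow> real \<Rightarrow> bool" where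
  "overdet_visc_sol \<Omega> u c \<longleftrightarrow> dirichlet_visc_sol \<Omega> u \<and> normal_deriv_eq \<Omega> u c"

definition phi_Omega :: "('a::euclidean_space) set \<Rightarrow> 'a \<Rightarrow> real" where
  "phi_Omega \<Omega> x = (3 powr (4/3) / 4) *
      (inradius \<Omega> powr (4/3) - (inradius \<Omega> - dist_bd \<Omega> x) powr (4/3))"

end

theory Submission
  imports Defs
begin

lemma local_pos_2nd:
  fixes h h' :: "real \<Rightarrow> real"
  assumes e: "e > 0"
    and d1: "\<And>t. \<bar>t - t0\<bar> < e \<Longrightarrow> (h has_real_derivative h' t) (at t)"
    and d2: "(h' has_real_derivative hdd) (at t0)"
    and h0: "h t0 = 0" and h'0: "h' t0 = 0" and pos: "hdd > 0"
  shows "\<exists>e'>0. \<forall>t. 0 < \<bar>t - t0\<bar> \<and> \<bar>t - t0\<bar> < e' \<longrightarrow> h t > 0"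
proof -
  have "((\<lambda>s. (h' (t0 + s) - h' t0) / s) \<longlongrightarrow> hdd) (at 0)"
    using d2 by (simp add: DERIV_def)
  then have "eventually (\<lambda>s. (h' (t0 + s) - h' t0) / s > 0) (at 0)"
    using pos by (rule order_tendstoD)
  then obtain e1 where e1: "e1 > 0" and
    e1': "\<And>s. s \<noteq> 0 \<Longrightarrow> dist s 0 < e1 \<Longrightarrow> h' (t0 + s) / s > 0"
    unfolding eventually_at using h'0 by auto
  define e' where "e' = min e e1"
  have "\<forall>t. 0 < \<bar>t - t0\<bar> \<and> \<bar>t - t0\<bar> < e' \<longrightarrow> h t > 0"
  proof (intro allI impI)
    fix t assume t: "0 < \<bar>t - t0\<bar> \<and> \<bar>t - t0\<bar> < e'"
    have sgn: "\<And>\<xi>. 0 < \<bar>\<xi> - t0\<bar> \<Longrightarrow> \<bar>\<xi> - t0\<bar> < e' \<Longrightarrow> h' \<xi> / (\<xi> - t0) > 0"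
      using e1'[of "_ - t0"] by (auto simp: e'_def dist_real_def)
    show "h t > 0"
    proof (cases "t < t0")
      case True
      have "\<exists>z. t < z \<and> z < t0 \<and> h t0 - h t = (t0 - t) * h' z"
        by (rule MVT2[OF True]) (use t in \<open>auto intro!: d1 simp: e'_def\<close>)
      then obtain z where z: "t < z" "z < t0" "h t0 - h t = (t0 - t) * h' z" by blast
      have "h' z / (z - t0) > 0" using sgn[of z] z t by auto
      then have "h' z < 0" using z by (simp add: zero_less_divide_iff)
      then have "(t0 - t) * h' z < 0" using True by (simp add: mult_pos_neg)
      then show ?thesis using z h0 by linarith
    next
      case False
      then have tt: "t0 < t" using t by auto
      have "\<exists>z. t0 < z \<and> z < t \<and> h t - h t0 = (t - t0) * h' z"
        by (rule MVT2[OF tt]) (use t in \<open>auto intro!: d1 simp: e'_def\<close>)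
      then obtain z where z: "t0 < z" "z < t" "h t - h t0 = (t - t0) * h' z" by blast
      have "h' z / (z - t0) > 0" using sgn[of z] z t by auto
      then have "h' z > 0" using z by (simp add: zero_less_divide_iff)
      then show ?thesis using z tt h0 by simp
    qed
  qed
  moreover have "e' > 0" using e e1 by (simp add: e'_def)
  ultimately show ?thesis by blast
qed


lemma radial_test:
  fixes c x1 :: "'a::euclidean_space" and g g' :: "real \<Rightarrow> real"
  assumes xc: "x1 \<noteq> c" and e: "e > 0"
    and dg: "\<And>r. \<bar>r - norm (x1 - c)\<bar> < e \<Longrightarrow> (g has_real_derivative g' r) (at r)"
    and dg2: "(g' has_real_derivative g2) (at (norm (x1 - c)))" and dl: "\<delta> > 0"
  shows "\<exists>\<psi> G H. C2_on UNIV \<psi> G H \<and> \<psi> x1 = g (norm (x1 - c)) \<and>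
     (\<exists>e'>0. \<forall>x\<in>ball x1 e'. \<psi> x \<le> g (norm (x - c))) \<and>
     inf_lap G H x1 = (g' (norm (x1 - c)))\<^sup>2 * (g2 - \<delta>)"
proof -
  define r1 where "r1 = norm (x1 - c)"
  have r1: "r1 > 0" using xc by (simp add: r1_def)
  define \<tau>1 where "\<tau>1 = r1^2"
  define a where "a = g' r1 / (2 * r1)"
  define b where "b = (g2 - \<delta> - 2 * a) / (8 * \<tau>1)"
  define Q where "Q = (\<lambda>\<tau>. g r1 + a * (\<tau> - \<tau>1) + b * (\<tau> - \<tau>1)^2)"
  define \<psi> where "\<psi> = (\<lambda>x. Q ((x - c) \<bullet> (x - c)))"
  define G where "G = (\<lambda>x. (2 * (a + 2 * b * ((x - c) \<bullet> (x - c) - \<tau>1))) *\<^sub>R (x - c))"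
  define H where "H = (\<lambda>x h. (2 * (a + 2 * b * ((x - c) \<bullet> (x - c) - \<tau>1))) *\<^sub>R h
                      + (8 * b * ((x - c) \<bullet> h)) *\<^sub>R (x - c))"
  have C2: "C2_on UNIV \<psi> G H"
    unfolding C2_on_def
  proof (intro conjI ballI allI)
    fix x :: 'a
    show "(\<psi> has_derivative (\<lambda>h. G x \<bullet> h)) (at x)"
      unfolding \<psi>_def Q_def G_def
      by (auto intro!: derivative_eq_intros ext simp: algebra_simps inner_commute)
    show "(G has_derivative H x) (at x)"
      unfolding H_def G_def
      by (auto intro!: derivative_eq_intros ext simp: algebra_simps inner_commute)
  next
    fix h :: 'a
    show "continuous_on UNIV (\<lambda>x. H x h)"
      unfolding H_def by (intro continuous_intros)
  qed
  have psi1: "\<psi> x1 = g r1"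
    by (simp add: \<psi>_def Q_def \<tau>1_def r1_def power2_norm_eq_inner)
  define q where "q = (\<lambda>r. Q (r^2))"
  define q' where "q' = (\<lambda>r::real. 2 * r * (a + 2 * b * (r^2 - \<tau>1)))"
  have dq: "(q has_real_derivative q' r) (at r)" for r
    unfolding q_def Q_def q'_def
    by (auto intro!: derivative_eq_intros simp: algebra_simps power2_eq_square)
  have dq': "(q' has_real_derivative (2 * a + 8 * b * \<tau>1)) (at r1)"
    unfolding q'_def
    by (auto intro!: derivative_eq_intros simp: algebra_simps power2_eq_square \<tau>1_def)
  define hh where "hh = (\<lambda>r. g r - q r)"
  define hh' where "hh' = (\<lambda>r. g' r - q' r)"
  have "\<exists>e'>0. \<forall>t. 0 < \<bar>t - r1\<bar> \<and> \<bar>t - r1\<bar> < e' \<longrightarrow> hh t > 0"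
  proof (rule local_pos_2nd[where h' = hh' and hdd = "g2 - (2 * a + 8 * b * \<tau>1)", OF e])
    show "(hh has_real_derivative hh' t) (at t)" if "\<bar>t - r1\<bar> < e" for t
      unfolding hh_def hh'_def using dg[of t] that dq[of t] by (auto intro!: derivative_intros simp: r1_def)
    show "(hh' has_real_derivative g2 - (2 * a + 8 * b * \<tau>1)) (at r1)"
      unfolding hh'_def using dg2 dq' by (auto intro!: derivative_intros simp: r1_def)
    show "hh r1 = 0" by (simp add: hh_def q_def Q_def \<tau>1_def)
    show "hh' r1 = 0" using r1 by (simp add: hh'_def q'_def a_def \<tau>1_def)
    show "g2 - (2 * a + 8 * b * \<tau>1) > 0" using r1 dl by (simp add: b_def \<tau>1_def field_simps)
  qed
  then obtain e' where e': "e' > 0" and hpos: "\<And>t. 0 < \<bar>t - r1\<bar> \<Longrightarrow> \<bar>t - r1\<bar> < e' \<Longrightarrow> hh t > 0"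
    by blast
  have le: "\<forall>x\<in>ball x1 e'. \<psi> x \<le> g (norm (x - c))"
  proof
    fix x assume x: "x \<in> ball x1 e'"
    have "\<bar>norm (x - c) - r1\<bar> \<le> norm (x - x1)"
      unfolding r1_def by (metis norm_triangle_ineq3 diff_diff_eq2 diff_add_cancel add_diff_cancel_left)
    also have "\<dots> < e'" using x by (simp add: dist_norm norm_minus_commute)
    finally have lt: "\<bar>norm (x - c) - r1\<bar> < e'" .
    have "q (norm (x - c)) \<le> g (norm (x - c))"
    proof (cases "norm (x - c) = r1")
      case True then show ?thesis by (simp add: q_def Q_def \<tau>1_def)
    next
      case False then show ?thesis using hpos[of "norm (x - c)"] lt by (simp add: hh_def)
    qed
    then show "\<psi> x \<le> g (norm (x - c))"
      by (simp add: \<psi>_def q_def power2_norm_eq_inner)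
  qed
  have ww: "(x1 - c) \<bullet> (x1 - c) = \<tau>1"
    by (simp add: \<tau>1_def r1_def power2_norm_eq_inner)
  have "inf_lap G H x1 = 8 * a^3 * \<tau>1 + 32 * a^2 * b * \<tau>1^2"
  proof -
    define w where "w = x1 - c"
    have ww': "w \<bullet> w = \<tau>1" using ww by (simp add: w_def)
    have "inf_lap G H x1 = ((2 * a) *\<^sub>R ((2 * a) *\<^sub>R w) + (8 * b * (w \<bullet> ((2 * a) *\<^sub>R w))) *\<^sub>R w) \<bullet> ((2 * a) *\<^sub>R w)"
      unfolding inf_lap_def G_def H_def w_def[symmetric] by (simp add: ww')
    also have "\<dots> = 8 * a^3 * \<tau>1 + 32 * a^2 * b * \<tau>1^2"
      by (simp add: inner_add_left ww' algebra_simps power2_eq_square power3_eq_cube)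
    finally show ?thesis .
  qed
  also have "\<dots> = (g' r1)\<^sup>2 * (g2 - \<delta>)"
    using r1 by (simp add: a_def b_def \<tau>1_def field_simps power2_eq_square power3_eq_cube)
  finally have lap: "inf_lap G H x1 = (g' r1)\<^sup>2 * (g2 - \<delta>)" .
  show ?thesis
    using C2 psi1 le e' lap unfolding r1_def by blast
qed


lemma radial_test_upper:
  fixes c x1 :: "'a::euclidean_space" and g g' :: "real \<Rightarrow> real"
  assumes xc: "x1 \<noteq> c" and e: "e > 0"
    and dg: "\<And>r. \<bar>r - norm (x1 - c)\<bar> < e \<Longrightarrow> (g has_real_derivative g' r) (at r)"
    and dg2: "(g' has_real_derivative g2) (at (norm (x1 - c)))" and dl: "\<delta> > 0"
  shows "\<exists>\<psi> G H. C2_on UNIV \<psi> G H \<and> \<psi> x1 = g (norm (x1 - c)) \<and>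
     (\<exists>e'>0. \<forall>x\<in>ball x1 e'. g (norm (x - c)) \<le> \<psi> x) \<and>
     inf_lap G H x1 = (g' (norm (x1 - c)))\<^sup>2 * (g2 + \<delta>)"
proof -
  have "\<exists>\<psi> G H. C2_on UNIV \<psi> G H \<and> \<psi> x1 = (\<lambda>r. - g r) (norm (x1 - c)) \<and>
     (\<exists>e'>0. \<forall>x\<in>ball x1 e'. \<psi> x \<le> (\<lambda>r. - g r) (norm (x - c))) \<and>
     inf_lap G H x1 = ((\<lambda>r. - g' r) (norm (x1 - c)))\<^sup>2 * (- g2 - \<delta>)"
    by (rule radial_test[OF xc e]) (use dg dg2 dl in \<open>auto intro!: derivative_intros\<close>)
  then obtain \<psi> G H where C2: "C2_on UNIV \<psi> G H" and p1: "\<psi> x1 = - g (norm (x1 - c))"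
    and le: "\<exists>e'>0. \<forall>x\<in>ball x1 e'. \<psi> x \<le> - g (norm (x - c))"
    and lap: "inf_lap G H x1 = (g' (norm (x1 - c)))\<^sup>2 * (- g2 - \<delta>)"
    by auto
  have lin: "linear (H x1)"
    using C2 unfolding C2_on_def by (auto dest: has_derivative_linear)
  have C2': "C2_on UNIV (\<lambda>x. - \<psi> x) (\<lambda>x. - G x) (\<lambda>x h. - H x h)"
    using C2 unfolding C2_on_def by (auto intro!: derivative_eq_intros continuous_intros)
  have "inf_lap (\<lambda>x. - G x) (\<lambda>x h. - H x h) x1 = - inf_lap G H x1"
    unfolding inf_lap_def using linear_neg[OF lin] by simp
  then have "inf_lap (\<lambda>x. - G x) (\<lambda>x h. - H x h) x1 = (g' (norm (x1 - c)))\<^sup>2 * (g2 + \<delta>)"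
    using lap by (simp add: algebra_simps)
  moreover have "\<exists>e'>0. \<forall>x\<in>ball x1 e'. g (norm (x - c)) \<le> - \<psi> x"
    using le by force
  ultimately show ?thesis using C2' p1 by force
qed

definition c0 :: real where "c0 = 3 powr (4/3) / 4"
definition fR :: "real \<Rightarrow> real \<Rightarrow> real" where "fR A t = c0 * (A powr (4/3) - (A - t) powr (4/3))"
definition fR1 :: "real \<Rightarrow> real \<Rightarrow> real" where "fR1 A t = c0 * (4/3) * (A - t) powr (1/3)"
definition fR2 :: "real \<Rightarrow> real \<Rightarrow> real" where "fR2 A t = - (c0 * (4/9) * (A - t) powr (-2/3))"

lemma c0_pos: "c0 > 0" by (simp add: c0_def)

lemma c0_cube: "c0^3 = 81/64"
proof -
  have "(3 powr (4/3) :: real)^3 = 3 powr (4/3 * 3)"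
    by (simp add: powr_realpow[symmetric] powr_powr)
  also have "\<dots> = 81" by simp
  finally show ?thesis by (simp add: c0_def power_divide)
qed

lemma fR_deriv: "t < A \<Longrightarrow> (fR A has_real_derivative fR1 A t) (at t)"
proof -
  assume tA: "t < A"
  have d: "DERIV (\<lambda>t. (A - t) powr (4/3)) t :> (4/3) * (A - t) powr (4/3 - of_nat 1) * (-1)"
    by (rule DERIV_fun_powr) (auto intro!: derivative_eq_intros simp: tA)
  have "DERIV (\<lambda>t. c0 * (A powr (4/3) - (A - t) powr (4/3))) t :> c0 * (0 - (4/3) * (A - t) powr (4/3 - of_nat 1) * (-1))"
    by (rule DERIV_cmult[OF DERIV_diff[OF DERIV_const d]])
  then show ?thesis unfolding fR_def[abs_def] fR1_def by (simp add: mult.assoc)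
qed

lemma fR1_deriv: "t < A \<Longrightarrow> (fR1 A has_real_derivative fR2 A t) (at t)"
proof -
  assume tA: "t < A"
  have d: "DERIV (\<lambda>t. (A - t) powr (1/3)) t :> (1/3) * (A - t) powr (1/3 - of_nat 1) * (-1)"
    by (rule DERIV_fun_powr) (auto intro!: derivative_eq_intros simp: tA)
  have "DERIV (\<lambda>t. c0 * (4/3) * (A - t) powr (1/3)) t :> c0 * (4/3) * ((1/3) * (A - t) powr (1/3 - of_nat 1) * (-1))"
    by (rule DERIV_cmult[OF d])
  then show ?thesis unfolding fR1_def[abs_def] fR2_def by (simp add: mult.assoc)
qed

lemma fR1_pos: "t < A \<Longrightarrow> fR1 A t > 0"
  by (simp add: fR1_def c0_pos)

lemma fR_identity: "t < A \<Longrightarrow> (fR1 A t)^2 * fR2 A t = -1"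
proof -
  assume tA: "t < A"
  have p: "((A - t) powr (1/3))^2 * (A - t) powr (-2/3) = 1"
    using tA by (simp add: power2_eq_square powr_add[symmetric])
  have "(fR1 A t)^2 * fR2 A t = - (c0^3 * (64/81)) * (((A - t) powr (1/3))^2 * (A - t) powr (-2/3))"
    by (simp add: fR1_def fR2_def power2_eq_square power3_eq_cube)
  also have "\<dots> = -1" using p by (simp add: c0_cube)
  finally show ?thesis .
qed

lemma fR_zero[simp]: "fR A 0 = 0" by (simp add: fR_def)


locale dom =
  fixes \<Omega> :: "'a::euclidean_space set"
  assumes op: "open \<Omega>" and bd: "bounded \<Omega>" and ne: "\<Omega> \<noteq> {}"
begin

abbreviation "d \<equiv> dist_bd \<Omega>"
abbreviation "\<rho> \<equiv> inradius \<Omega>"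
abbreviation "F \<equiv> frontier \<Omega>"

lemma F_ne: "F \<noteq> {}"
proof -
  have "\<Omega> \<noteq> UNIV" using bd by auto
  then have "UNIV \<inter> frontier \<Omega> \<noteq> {}"
    by (intro connected_Int_frontier) (use ne in auto)
  then show ?thesis by auto
qed

lemma F_closed: "closed F" by simp

lemma F_compact: "compact F"
  using bd by (simp add: compact_frontier_bounded)

lemma d_nonneg: "d x \<ge> 0" by (simp add: dist_bd_def infdist_nonneg)

lemma d_lip: "\<bar>d x - d y\<bar> \<le> dist x y"
  by (simp add: dist_bd_def infdist_triangle_abs)

lemma d_lip': "d x \<le> d y + dist x y"
  using d_lip[of x y] by linarith

lemma d_cont: "continuous_on S d"
  unfolding dist_bd_def[abs_def] by (intro continuous_intros)

lemma d_contat: "continuous (at x within S) d"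
  unfolding dist_bd_def[abs_def] by (intro continuous_intros)

lemma d_F: "x \<in> F \<Longrightarrow> d x = 0" by (simp add: dist_bd_def)

lemma F_notin: "x \<in> F \<Longrightarrow> x \<notin> \<Omega>"
  using op frontier_disjoint_eq by blast

lemma d_pos: "x \<in> \<Omega> \<Longrightarrow> d x > 0"
  unfolding dist_bd_def
  by (rule infdist_pos_not_in_closed) (use F_ne F_notin in auto)

lemma proj: obtains y where "y \<in> F" "d x = dist x y"
  using infdist_attains_inf[OF F_closed F_ne, of x] unfolding dist_bd_def by blast

lemma d_le_dist: "y \<in> F \<Longrightarrow> d x \<le> dist x y"
  unfolding dist_bd_def by (rule infdist_le)

lemma segment:
  assumes y: "y \<in> F" "d x = dist x y" and s: "0 \<le> s" "s \<le> 1"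
  shows "d (x + s *\<^sub>R (y - x)) = (1 - s) * d x"
proof -
  let ?z = "x + s *\<^sub>R (y - x)"
  have dzy: "dist ?z y = (1 - s) * dist x y"
  proof -
    have "?z - y = (1 - s) *\<^sub>R (x - y)" by (simp add: algebra_simps)
    then show ?thesis using s by (simp add: dist_norm)
  qed
  have dxz: "dist x ?z = s * dist x y"
    using s by (simp add: dist_norm norm_minus_commute)
  have "d ?z \<le> (1 - s) * d x" using d_le_dist[OF y(1), of ?z] dzy y(2) by simp
  moreover have "d x \<le> d ?z + s * d x" using d_lip'[of x ?z] dxz y(2) by simp
  ultimately show ?thesis by (simp add: algebra_simps)
qed

lemma ball_sub: assumes "x \<in> \<Omega>" shows "ball x (d x) \<subseteq> \<Omega>"
proof
  fix z assume z: "z \<in> ball x (d x)"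
  show "z \<in> \<Omega>"
  proof (rule ccontr)
    assume nz: "z \<notin> \<Omega>"
    have "closed_segment x z \<inter> F \<noteq> {}"
      by (rule connected_Int_frontier) (use assms nz in auto)
    then obtain w where w: "w \<in> closed_segment x z" "w \<in> F" by auto
    have "dist x w \<le> dist x z" using dist_in_closed_segment[OF w(1)] by (simp add: dist_commute)
    moreover have "d x \<le> dist x w" using d_le_dist[OF w(2)] .
    ultimately show False using z by (simp add: dist_commute)
  qed
qed

lemma closure_compact: "compact (closure \<Omega>)"
  using bd by (simp add: compact_eq_bounded_closed bounded_closure)

lemma rho_attained: "\<exists>x\<in>closure \<Omega>. d x = \<rho>"
proof -
  have "compact (d ` closure \<Omega>)" by (intro compact_continuous_image d_cont closure_compact)
  moreover have "d ` closure \<Omega> \<noteq> {}" using ne by auto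
  ultimately have "Sup (d ` closure \<Omega>) \<in> d ` closure \<Omega>"
    by (intro closed_contains_Sup) (auto simp: compact_imp_closed compact_imp_bounded bounded_imp_bdd_above)
  then show ?thesis unfolding inradius_def by auto
qed

lemma d_le_rho: "x \<in> closure \<Omega> \<Longrightarrow> d x \<le> \<rho>"
proof -
  assume x: "x \<in> closure \<Omega>"
  have "compact (d ` closure \<Omega>)" by (intro compact_continuous_image d_cont closure_compact)
  then have "bdd_above (d ` closure \<Omega>)" by (simp add: compact_imp_bounded bounded_imp_bdd_above)
  then show ?thesis unfolding inradius_def using x by (intro cSup_upper) auto
qed

lemma rho_pos: "\<rho> > 0"
proof -
  obtain x where "x \<in> \<Omega>" using ne by auto
  then show ?thesis using d_pos d_le_rho closure_subset by (meson less_le_trans subsetD)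
qed

end

lemma line_deriv:
  fixes \<phi> :: "'a::euclidean_space \<Rightarrow> real"
  assumes "(\<phi> has_derivative (\<lambda>h. G y \<bullet> h)) (at y)" "y = x0 + s *\<^sub>R e"
  shows "((\<lambda>s. \<phi> (x0 + s *\<^sub>R e)) has_real_derivative (G y \<bullet> e)) (at s)"
proof -
  have l: "((\<lambda>r. x0 + r *\<^sub>R e) has_derivative (\<lambda>r. r *\<^sub>R e)) (at s)"
    by (intro derivative_eq_intros) auto
  have "((\<lambda>r. \<phi> (x0 + r *\<^sub>R e)) has_derivative (\<lambda>k. G y \<bullet> (k *\<^sub>R e))) (at s)"
    by (rule has_derivative_compose[OF l]) (use assms in simp)
  then show ?thesis unfolding has_field_derivative_def
    by (rule has_derivative_eq_rhs) (auto simp: mult.commute)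
qed

lemma line_deriv2:
  fixes G :: "'a::euclidean_space \<Rightarrow> 'a"
  assumes "(G has_derivative H) (at x0)"
  shows "((\<lambda>s. G (x0 + s *\<^sub>R e) \<bullet> e) has_real_derivative (H e \<bullet> e)) (at 0)"
proof -
  have lin: "linear H" using assms by (rule has_derivative_linear)
  have l: "((\<lambda>r. x0 + r *\<^sub>R e) has_derivative (\<lambda>r. r *\<^sub>R e)) (at 0)"
    by (intro derivative_eq_intros) auto
  have "((\<lambda>r. G (x0 + r *\<^sub>R e)) has_derivative (\<lambda>k. H (k *\<^sub>R e))) (at 0)"
    by (rule has_derivative_compose[OF l]) (use assms in simp)
  then have "((\<lambda>r. G (x0 + r *\<^sub>R e) \<bullet> e) has_derivative (\<lambda>k. H (k *\<^sub>R e) \<bullet> e)) (at 0)"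
    by (intro derivative_eq_intros) auto
  then show ?thesis unfolding has_field_derivative_def
    by (rule has_derivative_eq_rhs) (auto simp: mult.commute linear_scale[OF lin])
qed

lemma line_compare:
  fixes \<phi> \<psi> :: "'a::euclidean_space \<Rightarrow> real" and p p' :: "real \<Rightarrow> real"
  assumes C2: "C2_on \<Omega> \<phi> G H" and x0: "x0 \<in> \<Omega>" and a: "a > 0"
    and inO: "\<And>s. \<bar>s\<bar> < a \<Longrightarrow> x0 + s *\<^sub>R e \<in> \<Omega>"
    and dp: "\<And>s. \<bar>s\<bar> < a \<Longrightarrow> (p has_real_derivative p' s) (at s)"
    and dp2: "(p' has_real_derivative p2) (at 0)"
    and grad: "G x0 \<bullet> e = p' 0"
    and minp: "\<exists>\<delta>>0. \<forall>s. -\<delta> < s \<and> s < 0 \<longrightarrow> \<phi> (x0 + s *\<^sub>R e) - p s \<ge> \<phi> x0 - p 0"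
  shows "H x0 e \<bullet> e \<ge> p2"
proof (rule ccontr)
  assume "\<not> H x0 e \<bullet> e \<ge> p2"
  then have neg: "p2 - H x0 e \<bullet> e > 0" by simp
  define k where "k = (\<lambda>s. - (\<phi> (x0 + s *\<^sub>R e) - p s - (\<phi> x0 - p 0)))"
  define k' where "k' = (\<lambda>s. - (G (x0 + s *\<^sub>R e) \<bullet> e - p' s))"
  have dphi: "\<And>y. y \<in> \<Omega> \<Longrightarrow> (\<phi> has_derivative (\<lambda>h. G y \<bullet> h)) (at y)"
    and dG: "\<And>y. y \<in> \<Omega> \<Longrightarrow> (G has_derivative H y) (at y)"
    using C2 unfolding C2_on_def by auto
  have "\<exists>e'>0. \<forall>t. 0 < \<bar>t - 0\<bar> \<and> \<bar>t - 0\<bar> < e' \<longrightarrow> k t > 0"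
  proof (rule local_pos_2nd[where h' = k' and hdd = "p2 - H x0 e \<bullet> e", OF a])
    show "(k has_real_derivative k' t) (at t)" if "\<bar>t - 0\<bar> < a" for t
      unfolding k_def k'_def
      using line_deriv[of \<phi> G "x0 + t *\<^sub>R e" x0 t e, OF dphi[OF inO[of t]] refl] dp[of t] that
      by (auto intro!: derivative_eq_intros)
    show "(k' has_real_derivative p2 - H x0 e \<bullet> e) (at 0)"
      unfolding k'_def using line_deriv2[OF dG[OF x0], of e] dp2
      by (auto intro!: derivative_eq_intros)
    show "k 0 = 0" by (simp add: k_def)
    show "k' 0 = 0" using grad by (simp add: k'_def)
    show "p2 - H x0 e \<bullet> e > 0" by (fact neg)
  qed
  then obtain e' where e': "e' > 0" and kp: "\<And>t. 0 < \<bar>t\<bar> \<Longrightarrow> \<bar>t\<bar> < e' \<Longrightarrow> k t > 0" by auto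
  obtain \<delta> where \<delta>: "\<delta> > 0" and mp: "\<And>s. -\<delta> < s \<Longrightarrow> s < 0 \<Longrightarrow> \<phi> (x0 + s *\<^sub>R e) - p s \<ge> \<phi> x0 - p 0"
    using minp by auto
  define s where "s = - min e' \<delta> / 2"
  have "k s > 0" using e' \<delta> by (intro kp) (auto simp: s_def)
  moreover have "\<phi> (x0 + s *\<^sub>R e) - p s \<ge> \<phi> x0 - p 0" using e' \<delta> by (intro mp) (auto simp: s_def)
  ultimately show False by (simp add: k_def)
qed

lemma line_compare_max:
  fixes \<phi> \<psi> :: "'a::euclidean_space \<Rightarrow> real" and p p' :: "real \<Rightarrow> real"
  assumes C2: "C2_on \<Omega> \<phi> G H" and x0: "x0 \<in> \<Omega>" and a: "a > 0"
    and inO: "\<And>s. \<bar>s\<bar> < a \<Longrightarrow> x0 + s *\<^sub>R e \<in> \<Omega>"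
    and dp: "\<And>s. \<bar>s\<bar> < a \<Longrightarrow> (p has_real_derivative p' s) (at s)"
    and dp2: "(p' has_real_derivative p2) (at 0)"
    and grad: "G x0 \<bullet> e = p' 0"
    and maxp: "\<exists>\<delta>>0. \<forall>s. -\<delta> < s \<and> s < 0 \<longrightarrow> \<phi> (x0 + s *\<^sub>R e) - p s \<le> \<phi> x0 - p 0"
  shows "H x0 e \<bullet> e \<le> p2"
proof -
  have C2': "C2_on \<Omega> (\<lambda>x. - \<phi> x) (\<lambda>x. - G x) (\<lambda>x h. - H x h)"
    using C2 unfolding C2_on_def by (auto intro!: derivative_eq_intros continuous_intros)
  have mp: "\<exists>\<delta>>0. \<forall>s. -\<delta> < s \<and> s < 0 \<longrightarrow> - \<phi> (x0 + s *\<^sub>R e) - - p s \<ge> - \<phi> x0 - - p 0"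
  proof -
    obtain \<delta> where "\<delta> > 0" "\<forall>s. -\<delta> < s \<and> s < 0 \<longrightarrow> \<phi> (x0 + s *\<^sub>R e) - p s \<le> \<phi> x0 - p 0"
      using maxp by blast
    then show ?thesis by (intro exI[of _ \<delta>]) auto
  qed
  have "(\<lambda>h. - H x0 h) e \<bullet> e \<ge> - p2"
  proof (rule line_compare[OF C2' x0 a inO, where p = "\<lambda>s. - p s" and p' = "\<lambda>s. - p' s"])
    show "((\<lambda>s. - p s) has_real_derivative - p' s) (at s)" if "\<bar>s\<bar> < a" for s
      by (rule DERIV_minus) (rule dp[OF that])
    show "((\<lambda>s. - p' s) has_real_derivative - p2) (at 0)"
      by (rule DERIV_minus) (rule dp2)
    show "(- G x0) \<bullet> e = - p' 0" using grad by simp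
    show "\<exists>\<delta>>0. \<forall>s. -\<delta> < s \<and> s < 0 \<longrightarrow> - \<phi> (x0 + s *\<^sub>R e) - - p s \<ge> - \<phi> x0 - - p 0"
      by (fact mp)
  qed
  then show ?thesis by simp
qed


lemma dir_deriv_le:
  fixes f :: "'a::real_normed_vector \<Rightarrow> real"
  assumes "(f has_derivative D) (at x)" "a > 0"
    "\<And>t. 0 < t \<Longrightarrow> t < a \<Longrightarrow> f (x + t *\<^sub>R v) \<le> f x + t * m"
  shows "D v \<le> m"
proof -
  have lin: "linear D" using assms(1) by (rule has_derivative_linear)
  have l: "((\<lambda>r. x + r *\<^sub>R v) has_derivative (\<lambda>r. r *\<^sub>R v)) (at 0)"
    by (intro derivative_eq_intros) auto
  have "((\<lambda>r. f (x + r *\<^sub>R v)) has_derivative (\<lambda>k. D (k *\<^sub>R v))) (at 0)"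
    by (rule has_derivative_compose[OF l]) (use assms in simp)
  then have "((\<lambda>r. f (x + r *\<^sub>R v)) has_real_derivative D v) (at 0)"
    unfolding has_field_derivative_def
    by (rule has_derivative_eq_rhs) (auto simp: mult.commute linear_scale[OF lin])
  then have "((\<lambda>r. (f (x + r *\<^sub>R v) - f x) / r) \<longlongrightarrow> D v) (at 0)"
    by (simp add: DERIV_def)
  then have lim: "((\<lambda>r. (f (x + r *\<^sub>R v) - f x) / r) \<longlongrightarrow> D v) (at_right 0)"
    by (rule filterlim_mono) (auto simp: at_within_le_at)
  have "\<forall>r. 0 < r \<and> r < a \<longrightarrow> (f (x + r *\<^sub>R v) - f x) / r \<le> m"
  proof (intro allI impI)
    fix r assume r: "0 < r \<and> r < a"
    then have "f (x + r *\<^sub>R v) - f x \<le> r * m" using assms(3)[of r] by simp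
    then show "(f (x + r *\<^sub>R v) - f x) / r \<le> m" using r by (simp add: divide_le_eq mult.commute)
  qed
  then have ev: "eventually (\<lambda>r. (f (x + r *\<^sub>R v) - f x) / r \<le> m) (at_right 0)"
    unfolding eventually_at_right_field using assms(2) by (intro exI[of _ a]) auto
  show ?thesis using tendsto_upperbound[OF lim ev] by simp
qed

lemma linear_repr:
  fixes D :: "'a::euclidean_space \<Rightarrow> real"
  assumes "linear D"
  shows "D h = (\<Sum>b\<in>Basis. D b *\<^sub>R b) \<bullet> h"
proof -
  have "D h = D (\<Sum>b\<in>Basis. (h \<bullet> b) *\<^sub>R b)" by (simp add: euclidean_representation)
  also have "\<dots> = (\<Sum>b\<in>Basis. (h \<bullet> b) * D b)"
    using assms by (simp add: linear_sum linear_scale)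
  also have "\<dots> = (\<Sum>b\<in>Basis. D b *\<^sub>R b) \<bullet> h"
    by (simp add: inner_sum_left inner_sum_right inner_commute mult.commute)
  finally show ?thesis .
qed

context dom begin

lemma grad_d:
  assumes x: "x \<in> \<Omega>" and D: "(d has_derivative D) (at x)" and y: "y \<in> F" "d x = dist x y"
  shows "D = (\<lambda>h. ((1 / d x) *\<^sub>R (x - y)) \<bullet> h)"
proof -
  have lin: "linear D" using D by (rule has_derivative_linear)
  define w where "w = (\<Sum>b\<in>Basis. D b *\<^sub>R b)"
  have Dw: "\<And>h. D h = w \<bullet> h" unfolding w_def by (rule linear_repr[OF lin])
  have dx: "d x > 0" using d_pos[OF x] .
  define e where "e = (1 / d x) *\<^sub>R (x - y)"
  have ne: "norm e = 1" using dx y(2) by (simp add: e_def dist_norm)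
  have lw: "d (x + t *\<^sub>R w) \<le> d x + t * norm w" if "0 < t" for t
    using d_lip'[of "x + t *\<^sub>R w" x] that by (simp add: dist_norm)
  have "D w \<le> norm w"
    by (rule dir_deriv_le[where a = 1 and v = w and m = "norm w", OF D]) (use lw in auto)
  then have "norm w ^ 2 \<le> norm w" by (simp add: Dw power2_norm_eq_inner)
  then have nw: "norm w \<le> 1"
  proof -
    assume a: "norm w ^ 2 \<le> norm w"
    show ?thesis
    proof (rule ccontr)
      assume "\<not> norm w \<le> 1"
      then have "norm w * 1 < norm w * norm w" by (intro mult_strict_left_mono) auto
      then show False using a by (simp add: power2_eq_square)
    qed
  qed
  have seg: "d (x + t *\<^sub>R (- e)) = d x - t" if "0 < t" "t < d x" for t
  proof -
    have "x + t *\<^sub>R (- e) = x + (t / d x) *\<^sub>R (y - x)"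
      using dx by (simp add: e_def algebra_simps)
    moreover have "d (x + (t / d x) *\<^sub>R (y - x)) = (1 - t / d x) * d x"
      by (rule segment[OF y]) (use that dx in auto)
    ultimately show ?thesis using dx by (simp add: algebra_simps)
  qed
  have "D (- e) \<le> -1"
    by (rule dir_deriv_le[where a = "d x" and v = "- e" and m = "-1", OF D dx]) (use seg in auto)
  then have we2: "w \<bullet> e \<ge> 1" using Dw by simp
  have "norm (w - e) ^ 2 = norm w ^ 2 - 2 * (w \<bullet> e) + norm e ^ 2"
    by (simp add: power2_norm_eq_inner inner_diff_left inner_diff_right inner_commute)
  also have "\<dots> \<le> 0"
  proof -
    have "(norm w)^2 \<le> 1" using nw by (intro power_le_one) auto
    then show ?thesis using we2 ne by simp
  qed
  finally have "w = e" by simp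
  then show ?thesis using Dw by (auto simp: e_def)
qed

end

lemma cube_root_lt:
  fixes s b :: real
  assumes "0 \<le> s" "s < b^3" "0 < b"
  shows "s powr (1/3) < b"
proof -
  have "s powr (1/3) < (b^3) powr (1/3)"
    using assms by (intro powr_less_mono2) auto
  also have "(b^3) powr (1/3) = b"
  proof -
    have "b^3 = b powr 3" using assms by simp
    then have "(b^3) powr (1/3) = b powr (3 * (1/3))" by (simp only: powr_powr)
    then show ?thesis using assms by simp
  qed
  finally show ?thesis .
qed

lemma fR_mono: "t \<le> t' \<Longrightarrow> t' \<le> A \<Longrightarrow> fR A t \<le> fR A t'"
  unfolding fR_def using c0_pos by (auto intro!: mult_left_mono powr_mono2)

lemma fR_le_top: "t \<le> A \<Longrightarrow> fR A t \<le> c0 * A powr (4/3)"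
  unfolding fR_def using c0_pos by (simp add: mult_le_cancel_left_pos)

lemma fR_top: "fR A A = c0 * A powr (4/3)" by (simp add: fR_def)

lemma grad_zero:
  fixes \<phi> :: "'a::euclidean_space \<Rightarrow> real"
  assumes D: "(\<phi> has_derivative (\<lambda>h. G \<bullet> h)) (at x0)" and r: "r > 0" and K: "K \<ge> 0"
    and lb: "\<And>x. x \<in> ball x0 r \<Longrightarrow> \<phi> x \<ge> \<phi> x0 - K * norm (x - x0) powr (4/3)"
  shows "G = 0"
proof (rule ccontr)
  assume G: "G \<noteq> 0"
  define v where "v = - G"
  have nv: "norm v > 0" using G by (simp add: v_def)
  define m where "m = norm G ^ 2 / 2"
  have m: "m > 0" using G by (simp add: m_def)
  define L where "L = K * norm v powr (4/3) + 1"
  have L: "L > 0" using K by (simp add: L_def add_nonneg_pos)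
  define a where "a = min (r / norm v) ((m / L)^3)"
  have a: "a > 0" using r nv m L by (simp add: a_def)
  have D': "((\<lambda>x. - \<phi> x) has_derivative (\<lambda>h. - (G \<bullet> h))) (at x0)"
    using D by (intro derivative_eq_intros) auto
  have "- (G \<bullet> v) \<le> m"
  proof (rule dir_deriv_le[where a = a, OF D' a])
    fix t assume t: "0 < t" "t < a"
    have inb: "x0 + t *\<^sub>R v \<in> ball x0 r"
    proof -
      have "t * norm v < r" using t nv by (simp add: a_def pos_less_divide_eq)
      then show ?thesis using t by (simp add: dist_norm abs_of_pos)
    qed
    have "t powr (1/3) < m / L" using t by (intro cube_root_lt) (auto simp: a_def m L)
    then have "K * norm v powr (4/3) * t powr (1/3) \<le> m"
    proof -
      assume h: "t powr (1/3) < m / L"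
      have "K * norm v powr (4/3) * t powr (1/3) \<le> L * t powr (1/3)"
        by (intro mult_right_mono) (auto simp: L_def)
      also have "\<dots> \<le> L * (m / L)" using h L by (intro mult_left_mono) auto
      finally show ?thesis using L by simp
    qed
    then have "t * (K * norm v powr (4/3) * t powr (1/3)) \<le> t * m" using t by (intro mult_left_mono) auto
    moreover have "K * norm (t *\<^sub>R v) powr (4/3) = t * (K * norm v powr (4/3) * t powr (1/3))"
    proof -
      have "norm (t *\<^sub>R v) powr (4/3) = t powr (4/3) * norm v powr (4/3)"
        using t by (simp add: powr_mult)
      moreover have "t powr (4/3) = t * t powr (1/3)"
      proof -
        have "t powr (4/3) = t powr (1 + 1/3)" by simp
        also have "\<dots> = t powr 1 * t powr (1/3)" by (rule powr_add)
        finally show ?thesis using t by simp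
      qed
      ultimately show ?thesis by (simp add: algebra_simps)
    qed
    ultimately have "K * norm (t *\<^sub>R v) powr (4/3) \<le> t * m" by linarith
    then show "- \<phi> (x0 + t *\<^sub>R v) \<le> - \<phi> x0 + t * m"
      using lb[OF inb] by simp
  qed
  then have "norm G ^ 2 \<le> m" by (simp add: v_def power2_norm_eq_inner)
  then show False using G by (simp add: m_def)
qed

locale domc = dom +
  assumes sing: "singular_set \<Omega> \<subseteq> high_ridge \<Omega>"
begin

abbreviation "phi \<equiv> (\<lambda>x. fR \<rho> (d x))"

lemma phi_eq: "phi_Omega \<Omega> = phi"
  by (simp add: fun_eq_iff phi_Omega_def fR_def c0_def)

lemma diff_d: "x \<in> \<Omega> \<Longrightarrow> d x \<noteq> \<rho> \<Longrightarrow> d differentiable (at x)"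
  using sing unfolding singular_set_def high_ridge_def using closure_subset by blast

lemma seg_e:
  assumes y: "y \<in> F" "d x0 = dist x0 y" and x0: "x0 \<in> \<Omega>"
    and s: "- d x0 \<le> s" "s \<le> 0"
  shows "d (x0 + s *\<^sub>R ((1 / d x0) *\<^sub>R (x0 - y))) = d x0 + s"
proof -
  have d0: "d x0 > 0" using d_pos[OF x0] .
  have "x0 + s *\<^sub>R ((1 / d x0) *\<^sub>R (x0 - y)) = x0 + (- s / d x0) *\<^sub>R (y - x0)"
    by (simp add: algebra_simps)
  moreover have "d (x0 + (- s / d x0) *\<^sub>R (y - x0)) = (1 - (- s / d x0)) * d x0"
    by (rule segment[OF y]) (use s d0 in \<open>auto simp: divide_le_eq le_divide_eq\<close>)
  ultimately show ?thesis using d0 by (simp add: algebra_simps)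
qed

lemma e_norm: assumes "y \<in> F" "d x0 = dist x0 y" "x0 \<in> \<Omega>"
  shows "norm ((1 / d x0) *\<^sub>R (x0 - y)) = 1"
  using assms d_pos[OF assms(3)] F_notin[OF assms(1)] by (auto simp: dist_norm)

lemma in_ball_e: assumes "y \<in> F" "d x0 = dist x0 y" "x0 \<in> \<Omega>" "\<bar>s\<bar> < d x0"
  shows "x0 + s *\<^sub>R ((1 / d x0) *\<^sub>R (x0 - y)) \<in> \<Omega>"
proof -
  have "x0 + s *\<^sub>R ((1 / d x0) *\<^sub>R (x0 - y)) \<in> ball x0 (d x0)"
    using assms e_norm[OF assms(1-3)] by (simp add: dist_norm del: scaleR_scaleR)
  then show ?thesis using ball_sub[OF assms(3)] by blast
qed

lemma ev_at:
  assumes x0: "x0 \<in> \<Omega>" and e: "e > 0" and P: "\<forall>y\<in>\<Omega> \<inter> ball x0 e. P y"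
  shows "eventually P (at x0)"
proof -
  obtain r where r: "r > 0" "ball x0 r \<subseteq> \<Omega>" using op x0 open_contains_ball by blast
  show ?thesis unfolding eventually_at
  proof (intro exI[of _ "min r e"] conjI ballI impI)
    show "min r e > 0" using r e by simp
    fix z assume z: "z \<noteq> x0 \<and> dist z x0 < min r e"
    then have "z \<in> ball x0 r" "z \<in> ball x0 e" by (auto simp: dist_commute)
    then show "P z" using P r by blast
  qed
qed

lemma phi_deriv:
  assumes x0: "x0 \<in> \<Omega>" and lt: "d x0 < \<rho>" and y: "y \<in> F" "d x0 = dist x0 y"
  shows "(phi has_derivative (\<lambda>h. fR1 \<rho> (d x0) * (((1 / d x0) *\<^sub>R (x0 - y)) \<bullet> h))) (at x0)"
proof -
  obtain D where D: "(d has_derivative D) (at x0)"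
    using diff_d[OF x0] lt unfolding differentiable_def by fastforce
  have "D = (\<lambda>h. ((1 / d x0) *\<^sub>R (x0 - y)) \<bullet> h)" by (rule grad_d[OF x0 D y])
  with D have D': "(d has_derivative (\<lambda>h. ((1 / d x0) *\<^sub>R (x0 - y)) \<bullet> h)) (at x0)" by simp
  show ?thesis
    using DERIV_compose_FDERIV[OF fR_deriv[OF lt] D'] by (simp add: mult.commute)
qed

lemma grad_G:
  assumes x0: "x0 \<in> \<Omega>" and lt: "d x0 < \<rho>" and y: "y \<in> F" "d x0 = dist x0 y"
    and C2: "C2_on \<Omega> \<phi> G H"
    and ext: "(\<lambda>h. G x0 \<bullet> h - fR1 \<rho> (d x0) * (((1 / d x0) *\<^sub>R (x0 - y)) \<bullet> h)) = (\<lambda>h. 0)"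
  shows "G x0 = fR1 \<rho> (d x0) *\<^sub>R ((1 / d x0) *\<^sub>R (x0 - y))"
proof -
  define e where "e = (1 / d x0) *\<^sub>R (x0 - y)"
  define g where "g = G x0 - fR1 \<rho> (d x0) *\<^sub>R e"
  have "G x0 \<bullet> g - fR1 \<rho> (d x0) * (e \<bullet> g) = 0" using fun_cong[OF ext, of g] by (simp add: e_def)
  then have "g \<bullet> g = 0" by (simp add: g_def inner_diff_left)
  then show ?thesis by (simp add: g_def e_def)
qed

lemma sub_regular:
  assumes x0: "x0 \<in> \<Omega>" and lt: "d x0 < \<rho>" and C2: "C2_on \<Omega> \<phi> G H"
    and mn: "local_min_at \<Omega> (\<lambda>x. \<phi> x - phi x) x0"
  shows "- inf_lap G H x0 \<le> 1"
proof -
  obtain y where y: "y \<in> F" "d x0 = dist x0 y" by (rule proj)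
  define d0 where "d0 = d x0"
  have d0: "d0 > 0" using d_pos[OF x0] by (simp add: d0_def)
  define e where "e = (1 / d0) *\<^sub>R (x0 - y)"
  have dphi: "(\<phi> has_derivative (\<lambda>h. G x0 \<bullet> h)) (at x0)" and dG: "(G has_derivative H x0) (at x0)"
    using C2 x0 unfolding C2_on_def by auto
  obtain r where r: "r > 0" and rm: "\<forall>z\<in>\<Omega> \<inter> ball x0 r. \<phi> x0 - phi x0 \<le> \<phi> z - phi z"
    using mn unfolding local_min_at_def by auto
  have "(\<lambda>h. G x0 \<bullet> h - fR1 \<rho> (d x0) * (((1 / d x0) *\<^sub>R (x0 - y)) \<bullet> h)) = (\<lambda>h. 0)"
    by (rule has_derivative_local_min[OF has_derivative_diff[OF dphi phi_deriv[OF x0 lt y]]])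
       (rule ev_at[OF x0 r rm])
  then have Gx: "G x0 = fR1 \<rho> d0 *\<^sub>R e"
    using grad_G[OF x0 lt y C2] by (simp add: e_def d0_def)
  have ne: "norm e = 1" unfolding e_def d0_def by (rule e_norm[OF y x0])
  have "H x0 e \<bullet> e \<ge> fR2 \<rho> d0"
  proof (rule line_compare[OF C2 x0, where a = "min d0 (\<rho> - d0)" and p = "\<lambda>s. fR \<rho> (d0 + s)" and p' = "\<lambda>s. fR1 \<rho> (d0 + s)"])
    show "min d0 (\<rho> - d0) > 0" using d0 lt by (simp add: d0_def)
    show "x0 + s *\<^sub>R e \<in> \<Omega>" if "\<bar>s\<bar> < min d0 (\<rho> - d0)" for s
      using in_ball_e[OF y x0, of s] that by (simp add: e_def d0_def)
    show "((\<lambda>s. fR \<rho> (d0 + s)) has_real_derivative fR1 \<rho> (d0 + s)) (at s)" if "\<bar>s\<bar> < min d0 (\<rho> - d0)" for s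
    proof -
      have l: "((\<lambda>s. d0 + s) has_real_derivative 1) (at s)" by (auto intro!: derivative_eq_intros)
      have "d0 + s < \<rho>" using that abs_ge_self[of s] by linarith
      from DERIV_chain2[OF fR_deriv[OF this] l] show ?thesis by simp
    qed
    show "((\<lambda>s. fR1 \<rho> (d0 + s)) has_real_derivative fR2 \<rho> d0) (at 0)"
    proof -
      have l: "((\<lambda>s. d0 + s) has_real_derivative 1) (at 0)" by (auto intro!: derivative_eq_intros)
      have "d0 + 0 < \<rho>" using lt by (simp add: d0_def)
      from DERIV_chain2[OF fR1_deriv[OF this] l] show ?thesis by simp
    qed
    show "G x0 \<bullet> e = fR1 \<rho> (d0 + 0)" using Gx ne by (simp add: inner_commute power2_norm_eq_inner[symmetric])
    show "\<exists>\<delta>>0. \<forall>s. - \<delta> < s \<and> s < 0 \<longrightarrow> \<phi> (x0 + s *\<^sub>R e) - fR \<rho> (d0 + s) \<ge> \<phi> x0 - fR \<rho> (d0 + 0)"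
    proof (intro exI[of _ "min r d0"] conjI allI impI)
      show "min r d0 > 0" using r d0 by simp
      fix s assume s: "- min r d0 < s \<and> s < 0"
      define z where "z = x0 + s *\<^sub>R e"
      have "\<bar>s\<bar> < d x0" using s by (auto simp: d0_def)
      then have zO: "z \<in> \<Omega>" using in_ball_e[OF y x0, of s] by (simp add: z_def e_def d0_def)
      have "- s < r" using s by linarith
      then have zb: "z \<in> ball x0 r" using s ne by (simp add: z_def dist_norm)
      have "- d x0 \<le> s" using s by (auto simp: d0_def)
      then have dz: "d z = d0 + s" using seg_e[OF y x0, of s] s by (simp add: z_def e_def d0_def)
      show "\<phi> z - fR \<rho> (d0 + s) \<ge> \<phi> x0 - fR \<rho> (d0 + 0)"
        using rm zO zb dz by (force simp: d0_def)
    qed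
  qed
  have lin: "linear (H x0)" using dG by (rule has_derivative_linear)
  have "inf_lap G H x0 = (fR1 \<rho> d0)^2 * (H x0 e \<bullet> e)"
    unfolding inf_lap_def Gx using linear_scale[OF lin] by (simp add: power2_eq_square)
  also have "\<dots> \<ge> (fR1 \<rho> d0)^2 * fR2 \<rho> d0"
    using \<open>H x0 e \<bullet> e \<ge> fR2 \<rho> d0\<close> by (intro mult_left_mono) auto
  finally have "inf_lap G H x0 \<ge> -1" using fR_identity[of d0 \<rho>] lt by (simp add: d0_def)
  then show ?thesis by simp
qed

end

context domc begin

lemma super_regular:
  assumes x0: "x0 \<in> \<Omega>" and lt: "d x0 < \<rho>" and C2: "C2_on \<Omega> \<phi> G H"
    and mx: "local_max_at \<Omega> (\<lambda>x. \<phi> x - phi x) x0"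
  shows "- inf_lap G H x0 \<ge> 1"
proof -
  obtain y where y: "y \<in> F" "d x0 = dist x0 y" by (rule proj)
  define d0 where "d0 = d x0"
  have d0: "d0 > 0" using d_pos[OF x0] by (simp add: d0_def)
  define e where "e = (1 / d0) *\<^sub>R (x0 - y)"
  have dphi: "(\<phi> has_derivative (\<lambda>h. G x0 \<bullet> h)) (at x0)" and dG: "(G has_derivative H x0) (at x0)"
    using C2 x0 unfolding C2_on_def by auto
  obtain r where r: "r > 0" and rm: "\<forall>z\<in>\<Omega> \<inter> ball x0 r. \<phi> z - phi z \<le> \<phi> x0 - phi x0"
    using mx unfolding local_max_at_def by auto
  have "(\<lambda>h. G x0 \<bullet> h - fR1 \<rho> (d x0) * (((1 / d x0) *\<^sub>R (x0 - y)) \<bullet> h)) = (\<lambda>h. 0)"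
    by (rule has_derivative_local_max[OF has_derivative_diff[OF dphi phi_deriv[OF x0 lt y]]])
       (rule ev_at[OF x0 r rm])
  then have Gx: "G x0 = fR1 \<rho> d0 *\<^sub>R e"
    using grad_G[OF x0 lt y C2] by (simp add: e_def d0_def)
  have ne: "norm e = 1" unfolding e_def d0_def by (rule e_norm[OF y x0])
  have "H x0 e \<bullet> e \<le> fR2 \<rho> d0"
  proof (rule line_compare_max[OF C2 x0, where a = "min d0 (\<rho> - d0)" and p = "\<lambda>s. fR \<rho> (d0 + s)" and p' = "\<lambda>s. fR1 \<rho> (d0 + s)"])
    show "min d0 (\<rho> - d0) > 0" using d0 lt by (simp add: d0_def)
    show "x0 + s *\<^sub>R e \<in> \<Omega>" if "\<bar>s\<bar> < min d0 (\<rho> - d0)" for s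
      using in_ball_e[OF y x0, of s] that by (simp add: e_def d0_def)
    show "((\<lambda>s. fR \<rho> (d0 + s)) has_real_derivative fR1 \<rho> (d0 + s)) (at s)" if "\<bar>s\<bar> < min d0 (\<rho> - d0)" for s
    proof -
      have l: "((\<lambda>s. d0 + s) has_real_derivative 1) (at s)" by (auto intro!: derivative_eq_intros)
      have "d0 + s < \<rho>" using that abs_ge_self[of s] by linarith
      from DERIV_chain2[OF fR_deriv[OF this] l] show ?thesis by simp
    qed
    show "((\<lambda>s. fR1 \<rho> (d0 + s)) has_real_derivative fR2 \<rho> d0) (at 0)"
    proof -
      have l: "((\<lambda>s. d0 + s) has_real_derivative 1) (at 0)" by (auto intro!: derivative_eq_intros)
      have "d0 + 0 < \<rho>" using lt by (simp add: d0_def)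
      from DERIV_chain2[OF fR1_deriv[OF this] l] show ?thesis by simp
    qed
    show "G x0 \<bullet> e = fR1 \<rho> (d0 + 0)" using Gx ne by (simp add: inner_commute power2_norm_eq_inner[symmetric])
    show "\<exists>\<delta>>0. \<forall>s. - \<delta> < s \<and> s < 0 \<longrightarrow> \<phi> (x0 + s *\<^sub>R e) - fR \<rho> (d0 + s) \<le> \<phi> x0 - fR \<rho> (d0 + 0)"
    proof (intro exI[of _ "min r d0"] conjI allI impI)
      show "min r d0 > 0" using r d0 by simp
      fix s assume s: "- min r d0 < s \<and> s < 0"
      define z where "z = x0 + s *\<^sub>R e"
      have "\<bar>s\<bar> < d x0" using s by (auto simp: d0_def)
      then have zO: "z \<in> \<Omega>" using in_ball_e[OF y x0, of s] by (simp add: z_def e_def d0_def)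
      have "- s < r" using s by linarith
      then have zb: "z \<in> ball x0 r" using s ne by (simp add: z_def dist_norm)
      have "- d x0 \<le> s" using s by (auto simp: d0_def)
      then have dz: "d z = d0 + s" using seg_e[OF y x0, of s] s by (simp add: z_def e_def d0_def)
      show "\<phi> z - fR \<rho> (d0 + s) \<le> \<phi> x0 - fR \<rho> (d0 + 0)"
        using rm zO zb dz by (force simp: d0_def)
    qed
  qed
  have lin: "linear (H x0)" using dG by (rule has_derivative_linear)
  have "inf_lap G H x0 = (fR1 \<rho> d0)^2 * (H x0 e \<bullet> e)"
    unfolding inf_lap_def Gx using linear_scale[OF lin] by (simp add: power2_eq_square)
  also have "\<dots> \<le> (fR1 \<rho> d0)^2 * fR2 \<rho> d0"
    using \<open>H x0 e \<bullet> e \<le> fR2 \<rho> d0\<close> by (intro mult_left_mono) auto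
  finally have "inf_lap G H x0 \<le> -1" using fR_identity[of d0 \<rho>] lt by (simp add: d0_def)
  then show ?thesis by simp
qed

lemma sub_ridge:
  assumes x0: "x0 \<in> \<Omega>" and eq: "d x0 = \<rho>" and C2: "C2_on \<Omega> \<phi> G H"
    and mn: "local_min_at \<Omega> (\<lambda>x. \<phi> x - phi x) x0"
  shows "- inf_lap G H x0 \<le> 1"
proof -
  have dphi: "(\<phi> has_derivative (\<lambda>h. G x0 \<bullet> h)) (at x0)" and dG: "(G has_derivative H x0) (at x0)"
    using C2 x0 unfolding C2_on_def by auto
  obtain r where r: "r > 0" and rm: "\<forall>z\<in>\<Omega> \<inter> ball x0 r. \<phi> x0 - phi x0 \<le> \<phi> z - phi z"
    using mn unfolding local_min_at_def by auto
  have d0: "d x0 > 0" using d_pos[OF x0] .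
  have "G x0 = 0"
  proof (rule grad_zero[OF dphi, of "min r (d x0)" c0])
    show "min r (d x0) > 0" using r d0 by simp
    show "c0 \<ge> 0" using c0_pos by simp
    fix x assume x: "x \<in> ball x0 (min r (d x0))"
    have xO: "x \<in> \<Omega>" using ball_sub[OF x0] x by auto
    have xr: "x \<in> ball x0 r" using x by auto
    have "\<rho> - d x \<ge> 0" using d_le_rho[of x] xO closure_subset by auto
    moreover have "\<rho> - d x \<le> norm (x - x0)"
      using d_lip'[of x0 x] eq by (simp add: dist_norm norm_minus_commute)
    ultimately have "(\<rho> - d x) powr (4/3) \<le> norm (x - x0) powr (4/3)" by (intro powr_mono2) auto
    then have "phi x \<ge> phi x0 - c0 * norm (x - x0) powr (4/3)"
      using c0_pos eq by (simp add: fR_def algebra_simps mult_left_mono)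
    then show "\<phi> x \<ge> \<phi> x0 - c0 * norm (x - x0) powr (4/3)"
      using rm xO xr by force
  qed
  then show ?thesis
    using has_derivative_linear[OF dG] by (simp add: inf_lap_def linear_0)
qed

lemma super_ridge:
  assumes x0: "x0 \<in> \<Omega>" and eq: "d x0 = \<rho>" and C2: "C2_on \<Omega> \<phi> G H"
    and mx: "local_max_at \<Omega> (\<lambda>x. \<phi> x - phi x) x0"
  shows "- inf_lap G H x0 \<ge> 1"
proof -
  have dphi: "(\<phi> has_derivative (\<lambda>h. G x0 \<bullet> h)) (at x0)" and dG: "(G has_derivative H x0) (at x0)"
    using C2 x0 unfolding C2_on_def by auto
  obtain r where r: "r > 0" and rm: "\<forall>z\<in>\<Omega> \<inter> ball x0 r. \<phi> z - phi z \<le> \<phi> x0 - phi x0"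
    using mx unfolding local_max_at_def by auto
  have d0: "d x0 > 0" using d_pos[OF x0] .
  have phile: "phi z \<le> phi x0" if "z \<in> \<Omega>" for z
    using fR_le_top[of "d z" \<rho>] d_le_rho[of z] that closure_subset eq by (auto simp: fR_top)
  have "\<forall>z\<in>\<Omega> \<inter> ball x0 r. \<phi> z \<le> \<phi> x0" using rm phile by force
  then have "(\<lambda>h. G x0 \<bullet> h) = (\<lambda>h. 0)"
    by (intro has_derivative_local_max[OF dphi] ev_at[OF x0 r])
  then have G0: "G x0 = 0" by (metis inner_eq_zero_iff)
  obtain y where y: "y \<in> F" "d x0 = dist x0 y" by (rule proj)
  define e where "e = (1 / d x0) *\<^sub>R (x0 - y)"
  have ne: "norm e = 1" unfolding e_def by (rule e_norm[OF y x0])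
  define M where "M = \<bar>H x0 e \<bullet> e\<bar> + 1"
  have M: "M > 0" by (simp add: M_def add_nonneg_pos)
  define b where "b = min 1 (c0 / M)"
  have b: "b > 0" using M c0_pos by (simp add: b_def)
  have "H x0 e \<bullet> e \<le> - 2 * M"
  proof (rule line_compare_max[OF C2 x0, where a = "d x0" and p = "\<lambda>s. - M * s^2" and p' = "\<lambda>s. - 2 * M * s"])
    show "d x0 > 0" by (fact d0)
    show "x0 + s *\<^sub>R e \<in> \<Omega>" if "\<bar>s\<bar> < d x0" for s
      using in_ball_e[OF y x0, of s] that by (simp add: e_def)
    show "((\<lambda>s. - M * s^2) has_real_derivative - 2 * M * s) (at s)" for s
      by (auto intro!: derivative_eq_intros)
    show "((\<lambda>s. - 2 * M * s) has_real_derivative - 2 * M) (at 0)"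
      by (auto intro!: derivative_eq_intros)
    show "G x0 \<bullet> e = - 2 * M * 0" using G0 by simp
    show "\<exists>\<delta>>0. \<forall>s. - \<delta> < s \<and> s < 0 \<longrightarrow> \<phi> (x0 + s *\<^sub>R e) - - M * s^2 \<le> \<phi> x0 - - M * 0^2"
    proof (intro exI[of _ "min r (min (d x0) (b^3))"] conjI allI impI)
      show "min r (min (d x0) (b^3)) > 0" using r d0 b by simp
      fix s assume s: "- min r (min (d x0) (b^3)) < s \<and> s < 0"
      define z where "z = x0 + s *\<^sub>R e"
      have "\<bar>s\<bar> < d x0" using s by auto
      then have zO: "z \<in> \<Omega>" using in_ball_e[OF y x0, of s] by (simp add: z_def e_def)
      have "- s < r" using s by linarith
      then have zb: "z \<in> ball x0 r" using s ne by (simp add: z_def dist_norm)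
      have "- d x0 \<le> s" using s by auto
      then have dz: "d z = \<rho> + s" using seg_e[OF y x0, of s] s eq by (simp add: z_def e_def)
      define u where "u = - s"
      have u: "u > 0" "u < b^3" using s by (auto simp: u_def)
      have phiz: "phi z = phi x0 - c0 * u powr (4/3)"
        using dz eq by (simp add: fR_def u_def algebra_simps)
      have "\<phi> z \<le> \<phi> x0 - c0 * u powr (4/3)" using rm zO zb phiz by force
      moreover have "M * u^2 \<le> c0 * u powr (4/3)"
      proof -
        have ub: "u powr (1/3) < b" using u b by (intro cube_root_lt) auto
        have eqn: "u^2 = u powr (4/3) * (u powr (1/3))^2"
        proof -
          have "u^2 = u powr 2" using u by simp
          also have "(2::real) = 4/3 + 1/3 + 1/3" by simp
          also have "u powr (4/3 + 1/3 + 1/3) = u powr (4/3) * (u powr (1/3) * u powr (1/3))"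
            by (simp only: powr_add mult.assoc)
          finally show ?thesis by (simp add: power2_eq_square)
        qed
        have "(u powr (1/3))^2 \<le> b" 
        proof -
          have "(u powr (1/3))^2 \<le> b^2" using ub by (intro power_mono) auto
          also have "b^2 \<le> b"
          proof -
            have "b * b \<le> b * 1" by (rule mult_left_mono) (use b in \<open>auto simp: b_def\<close>)
            then show ?thesis by (simp add: power2_eq_square)
          qed
          finally show ?thesis .
        qed
        then have X: "(u powr (1/3))^2 \<le> c0 / M" using min.cobounded2[of 1 "c0 / M"] unfolding b_def by linarith
        have MX: "M * (u powr (1/3))^2 \<le> c0"
        proof -
          have "M * (u powr (1/3))^2 \<le> M * (c0 / M)" using M X by (intro mult_left_mono) auto
          then show ?thesis using M by simp
        qed
        have "M * u^2 = u powr (4/3) * (M * (u powr (1/3))^2)" using eqn by (simp add: algebra_simps)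
        also have "\<dots> \<le> u powr (4/3) * c0" using MX by (intro mult_left_mono) auto
        finally show ?thesis by (simp add: mult.commute)
      qed
      ultimately show "\<phi> z - - M * s^2 \<le> \<phi> x0 - - M * 0^2" by (simp add: u_def)
    qed
  qed
  then show ?thesis by (simp add: M_def)
qed

lemma phi_visc: "visc_sol \<Omega> phi"
proof -
  have cont: "continuous_on \<Omega> phi"
    unfolding fR_def
    by (intro continuous_intros continuous_on_powr' d_cont)
       (use d_le_rho closure_subset in auto)
  have dle: "x \<in> \<Omega> \<Longrightarrow> d x \<le> \<rho>" for x using d_le_rho closure_subset by auto
  show ?thesis
    unfolding visc_sol_def visc_subsol_def visc_supersol_def
  proof (intro conjI allI impI cont)
    fix \<phi> G H x0
    assume a: "C2_on \<Omega> \<phi> G H \<and> x0 \<in> \<Omega> \<and> local_min_at \<Omega> (\<lambda>x. \<phi> x - phi x) x0"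
    show "- inf_lap G H x0 \<le> 1"
    proof (cases "d x0 < \<rho>")
      case True then show ?thesis using sub_regular a by blast
    next
      case False then have "d x0 = \<rho>" using dle a by force
      then show ?thesis using sub_ridge a by blast
    qed
  next
    fix \<phi> G H x0
    assume a: "C2_on \<Omega> \<phi> G H \<and> x0 \<in> \<Omega> \<and> local_max_at \<Omega> (\<lambda>x. \<phi> x - phi x) x0"
    show "- inf_lap G H x0 \<ge> 1"
    proof (cases "d x0 < \<rho>")
      case True then show ?thesis using super_regular a by blast
    next
      case False then have "d x0 = \<rho>" using dle a by force
      then show ?thesis using super_ridge a by blast
    qed
  qed
qed

lemma phi_dirichlet: "dirichlet_visc_sol \<Omega> phi"
proof -
  have cont: "continuous_on (closure \<Omega>) phi"
    unfolding fR_def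
    by (intro continuous_intros continuous_on_powr' d_cont) (use d_le_rho in auto)
  show ?thesis unfolding dirichlet_visc_sol_def using cont phi_visc d_F by auto
qed

end

lemma C2_shift: "C2_on UNIV \<psi> G H \<Longrightarrow> C2_on S (\<lambda>x. \<psi> x + C) G H"
  unfolding C2_on_def by (auto intro!: derivative_eq_intros intro: continuous_on_subset)

context dom begin

lemma closure_notF: "x \<in> closure \<Omega> \<Longrightarrow> x \<notin> F \<Longrightarrow> x \<in> \<Omega>"
  by (simp add: frontier_def interior_open[OF op])

lemma upper_bound:
  assumes u: "dirichlet_visc_sol \<Omega> u" and lam: "lam > 1" and Rgt: "R > \<rho>"
  shows "\<forall>x\<in>closure \<Omega>. u x \<le> lam * fR R (d x)"
proof (rule ccontr)
  assume "\<not> ?thesis"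
  then obtain x where x: "x \<in> closure \<Omega>" "u x > lam * fR R (d x)" by force
  have ucont: "continuous_on (closure \<Omega>) u" and u0: "\<And>x. x \<in> F \<Longrightarrow> u x = 0"
    and usub: "visc_subsol \<Omega> u"
    using u unfolding dirichlet_visc_sol_def visc_sol_def by auto
  have wcont: "continuous_on (closure \<Omega>) (\<lambda>x. lam * fR R (d x))"
  proof -
    have "\<forall>x\<in>closure \<Omega>. R - d x > 0"
    proof
      fix x assume "x \<in> closure \<Omega>"
      then have "d x \<le> \<rho>" by (rule d_le_rho)
      then show "R - d x > 0" using Rgt by linarith
    qed
    then show ?thesis unfolding fR_def
      by (intro continuous_intros continuous_on_powr' d_cont) auto
  qed
  obtain x1 where x1: "x1 \<in> closure \<Omega>" and mx: "\<forall>z\<in>closure \<Omega>. u z - lam * fR R (d z) \<le> u x1 - lam * fR R (d x1)"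
    using continuous_attains_sup[OF closure_compact _ continuous_on_diff[OF ucont wcont]] ne by auto
  have pos: "u x1 - lam * fR R (d x1) > 0" using mx x(1) x(2) by fastforce
  have x1O: "x1 \<in> \<Omega>"
  proof (rule closure_notF[OF x1])
    show "x1 \<notin> F"
    proof
      assume "x1 \<in> F"
      then have "u x1 = 0" "d x1 = 0" using u0 d_F by auto
      then show False using pos by simp
    qed
  qed
  obtain y where y: "y \<in> F" "d x1 = dist x1 y" by (rule proj)
  define r1 where "r1 = norm (x1 - y)"
  have r1: "r1 = d x1" using y by (simp add: r1_def dist_norm)
  have xy: "x1 \<noteq> y" using y x1O F_notin by auto
  have r1R: "r1 < R" using r1 d_le_rho[OF x1] Rgt by simp
  define g where "g = (\<lambda>r. lam * fR R r)"
  define g' where "g' = (\<lambda>r. lam * fR1 R r)"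
  define a1 where "a1 = lam * fR1 R r1"
  have a1: "a1 > 0" using fR1_pos[OF r1R] lam by (simp add: a1_def)
  define \<delta> where "\<delta> = (lam^3 - 1) / (2 * a1^2)"
  have lam3: "lam^3 > 1" using lam by (simp add: one_less_power)
  have \<delta>: "\<delta> > 0" using lam3 a1 by (simp add: \<delta>_def)
  obtain \<psi> G H where C2: "C2_on UNIV \<psi> G H" and p1: "\<psi> x1 = g r1"
    and e': "\<exists>e'>0. \<forall>x\<in>ball x1 e'. g (norm (x - y)) \<le> \<psi> x"
    and lap: "inf_lap G H x1 = (g' r1)\<^sup>2 * (lam * fR2 R r1 + \<delta>)"
  proof -
    have "\<exists>\<psi> G H. C2_on UNIV \<psi> G H \<and> \<psi> x1 = g (norm (x1 - y)) \<and>
     (\<exists>e'>0. \<forall>x\<in>ball x1 e'. g (norm (x - y)) \<le> \<psi> x) \<and>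
     inf_lap G H x1 = (g' (norm (x1 - y)))\<^sup>2 * (lam * fR2 R r1 + \<delta>)"
    proof (rule radial_test_upper[OF xy, where e = "R - r1"])
      show "R - r1 > 0" using r1R by simp
      show "(g has_real_derivative g' r) (at r)" if "\<bar>r - norm (x1 - y)\<bar> < R - r1" for r
      proof -
        have "r < R" using that r1_def by linarith
        then show ?thesis unfolding g_def g'_def by (intro DERIV_cmult fR_deriv)
      qed
      show "(g' has_real_derivative lam * fR2 R r1) (at (norm (x1 - y)))"
        unfolding g'_def r1_def[symmetric] using r1R by (intro DERIV_cmult fR1_deriv)
      show "\<delta> > 0" by (fact \<delta>)
    qed
    then show ?thesis using that unfolding r1_def by blast
  qed
  obtain e' where e'pos: "e' > 0" and le: "\<forall>x\<in>ball x1 e'. g (norm (x - y)) \<le> \<psi> x" using e' by blast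
  define C where "C = u x1 - \<psi> x1"
  have C2': "C2_on \<Omega> (\<lambda>x. \<psi> x + C) G H" by (rule C2_shift[OF C2])
  have lm: "local_min_at \<Omega> (\<lambda>x. (\<psi> x + C) - u x) x1"
    unfolding local_min_at_def
  proof (intro exI[of _ "min e' (R - r1)"] conjI ballI)
    show "min e' (R - r1) > 0" using e'pos r1R by simp
    fix z assume z: "z \<in> \<Omega> \<inter> ball x1 (min e' (R - r1))"
    have zc: "z \<in> closure \<Omega>" using z closure_subset by auto
    have "norm (z - y) \<le> norm (x1 - y) + norm (z - x1)" using norm_triangle_ineq[of "z - x1" "x1 - y"] by simp
    moreover have "norm (z - x1) < R - r1" using z by (simp add: dist_norm norm_minus_commute)
    ultimately have zyR: "norm (z - y) \<le> R" unfolding r1_def by linarith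
    have "d z \<le> norm (z - y)" using d_le_dist[OF y(1), of z] by (simp add: dist_norm)
    then have "fR R (d z) \<le> fR R (norm (z - y))" using zyR by (rule fR_mono)
    then have "lam * fR R (d z) \<le> g (norm (z - y))" using lam by (simp add: g_def)
    also have "\<dots> \<le> \<psi> z" using le z by auto
    finally have "lam * fR R (d z) \<le> \<psi> z" .
    moreover have "u z - lam * fR R (d z) \<le> u x1 - lam * fR R (d x1)" using mx zc by blast
    moreover have "\<psi> x1 = lam * fR R (d x1)" using p1 r1 by (simp add: g_def)
    ultimately show "(\<psi> x1 + C) - u x1 \<le> (\<psi> z + C) - u z" by (simp add: C_def)
  qed
  have "- inf_lap G H x1 \<le> 1"
    using usub C2' x1O lm unfolding visc_subsol_def by blast
  moreover have "inf_lap G H x1 = a1^2 * \<delta> - lam^3"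
  proof -
    have "inf_lap G H x1 = lam^3 * ((fR1 R r1)^2 * fR2 R r1) + a1^2 * \<delta>"
      using lap by (simp add: g'_def a1_def algebra_simps power2_eq_square power3_eq_cube)
    then show ?thesis using fR_identity[OF r1R] by simp
  qed
  moreover have "a1^2 * \<delta> = (lam^3 - 1) / 2" using a1 by (simp add: \<delta>_def)
  ultimately have "lam^3 - (lam^3 - 1) / 2 \<le> 1" by simp
  then have "lam^3 \<le> 1" by (simp add: field_simps)
  then show False using lam3 by simp
qed

lemma u_le_phi:
  assumes u: "dirichlet_visc_sol \<Omega> u" and x: "x \<in> closure \<Omega>"
  shows "u x \<le> fR \<rho> (d x)"
proof -
  define t where "t = (\<lambda>n::nat. inverse (real (Suc n)))"
  have t0: "t \<longlonglongrightarrow> 0" unfolding t_def by (rule LIMSEQ_inverse_real_of_nat)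
  have tpos: "t n > 0" for n by (simp add: t_def)
  have bnd: "u x \<le> (1 + t n) * fR (\<rho> + t n) (d x)" for n
    using upper_bound[OF u, of "1 + t n" "\<rho> + t n"] tpos[of n] x by auto
  have ta: "(\<lambda>n. \<rho> + t n) \<longlonglongrightarrow> \<rho> + 0" by (intro tendsto_intros t0)
  have tb: "(\<lambda>n. \<rho> + t n - d x) \<longlonglongrightarrow> \<rho> + 0 - d x" by (intro tendsto_intros t0)
  have a: "(\<lambda>n. (\<rho> + t n) powr (4/3)) \<longlonglongrightarrow> (\<rho> + 0) powr (4/3)"
    by (rule tendsto_powr'[OF ta tendsto_const]) (use rho_pos in simp)
  have ev: "\<forall>\<^sub>F n in sequentially. 0 \<le> \<rho> + t n - d x"
    using d_le_rho[OF x] tpos by (intro always_eventually allI) (metis add_increasing2 diff_ge_0_iff_ge less_le add.commute diff_add_eq)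
  have b: "(\<lambda>n. (\<rho> + t n - d x) powr (4/3)) \<longlonglongrightarrow> (\<rho> + 0 - d x) powr (4/3)"
    by (rule tendsto_powr'[OF tb tendsto_const]) (use ev in simp)
  have lim: "(\<lambda>n. (1 + t n) * (c0 * ((\<rho> + t n) powr (4/3) - (\<rho> + t n - d x) powr (4/3))))
      \<longlonglongrightarrow> (1 + 0) * (c0 * ((\<rho> + 0) powr (4/3) - (\<rho> + 0 - d x) powr (4/3)))"
    by (intro tendsto_mult tendsto_add tendsto_const t0 tendsto_diff a b)
  have "u x \<le> (1 + 0) * (c0 * ((\<rho> + 0) powr (4/3) - (\<rho> + 0 - d x) powr (4/3)))"
    by (rule LIMSEQ_le_const[OF lim]) (use bnd in \<open>auto simp: fR_def\<close>)
  then show ?thesis by (simp add: fR_def)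
qed

end

context domc begin

definition pr :: "'a \<Rightarrow> 'a" where "pr w = (SOME y. y \<in> F \<and> d w = dist w y)"

lemma pr: "pr w \<in> F" "d w = dist w (pr w)"
proof -
  obtain y where "y \<in> F" "d w = dist w y" by (rule proj)
  then have "\<exists>y. y \<in> F \<and> d w = dist w y" by blast
  from someI_ex[OF this] show "pr w \<in> F" "d w = dist w (pr w)" unfolding pr_def by auto
qed

lemma proj_unique:
  assumes w: "w \<in> \<Omega>" and dif: "d differentiable (at w)"
    and y1: "y1 \<in> F" "d w = dist w y1" and y2: "y2 \<in> F" "d w = dist w y2"
  shows "y1 = y2"
proof -
  obtain D where D: "(d has_derivative D) (at w)" using dif unfolding differentiable_def by blast
  define v1 where "v1 = (1 / d w) *\<^sub>R (w - y1)"
  define v2 where "v2 = (1 / d w) *\<^sub>R (w - y2)"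
  have "D = (\<lambda>h. v1 \<bullet> h)" unfolding v1_def by (rule grad_d[OF w D y1])
  moreover have "D = (\<lambda>h. v2 \<bullet> h)" unfolding v2_def by (rule grad_d[OF w D y2])
  ultimately have "(\<lambda>h. v1 \<bullet> h) = (\<lambda>h. v2 \<bullet> h)" by simp
  then have "v1 \<bullet> (v1 - v2) = v2 \<bullet> (v1 - v2)" by metis
  then have "(v1 - v2) \<bullet> (v1 - v2) = 0" by (simp add: inner_diff_left)
  then have "v1 = v2" by simp
  then show ?thesis using d_pos[OF w] by (simp add: v1_def v2_def)
qed

lemma pr_cont:
  assumes U: "U \<subseteq> \<Omega>" and dif: "\<And>w. w \<in> U \<Longrightarrow> d differentiable (at w)"
  shows "continuous_on U pr"
proof -
  have eq: "(\<lambda>x. Pair x (pr x)) ` U = (U \<times> F) \<inter> {p. d (fst p) = dist (fst p) (snd p)}"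
  proof
    show "(\<lambda>x. Pair x (pr x)) ` U \<subseteq> (U \<times> F) \<inter> {p. d (fst p) = dist (fst p) (snd p)}"
      using pr by auto
    show "(U \<times> F) \<inter> {p. d (fst p) = dist (fst p) (snd p)} \<subseteq> (\<lambda>x. Pair x (pr x)) ` U"
    proof
      fix p assume p: "p \<in> (U \<times> F) \<inter> {p. d (fst p) = dist (fst p) (snd p)}"
      obtain w q where pq: "p = (w, q)" by (cases p)
      have a: "w \<in> U" "q \<in> F" "d w = dist w q" using p pq by auto
      have "q = pr w" using proj_unique[OF _ dif[OF a(1)] a(2,3) pr] a U by blast
      then show "p \<in> (\<lambda>x. Pair x (pr x)) ` U" using a pq by auto
    qed
  qed
  have cl: "closed {p :: 'a \<times> 'a. d (fst p) = dist (fst p) (snd p)}"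
  proof (intro closed_Collect_eq continuous_intros)
    show "continuous_on UNIV (\<lambda>x::'a\<times>'a. d (fst x))"
      unfolding dist_bd_def by (intro continuous_intros)
  qed
  show ?thesis
  proof (subst continuous_closed_graph_eq[OF F_compact])
    show "pr \<in> U \<rightarrow> F" using pr by auto
    show "closedin (top_of_set (U \<times> F)) ((\<lambda>x. Pair x (pr x)) ` U)"
      unfolding eq by (rule closedin_closed_Int[OF cl])
  qed
qed

lemma ray_extend:
  assumes cut: "cut_locus \<Omega> = high_ridge \<Omega>"
    and z: "z \<in> \<Omega>" "d z < \<rho>" and y: "y \<in> F" "d z = dist z y"
  shows "\<exists>s>0. y + ((d z + s) / d z) *\<^sub>R (z - y) \<in> \<Omega> \<and> d (y + ((d z + s) / d z) *\<^sub>R (z - y)) = d z + s"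
proof -
  define T where "T = d z"
  have T: "T > 0" using d_pos[OF z(1)] by (simp add: T_def)
  have "z \<notin> closure (singular_set \<Omega>)"
    using cut z unfolding cut_locus_def high_ridge_def by (auto simp: T_def)
  then obtain r where r: "r > 0" "ball z r \<inter> closure (singular_set \<Omega>) = {}"
    using open_contains_ball[of "- closure (singular_set \<Omega>)"] by (force simp: open_Compl)
  define r' where "r' = min r T"
  have r': "r' > 0" using r T by (simp add: r'_def)
  define U where "U = ball z r'"
  have UO: "U \<subseteq> \<Omega>" using ball_sub[OF z(1)] by (auto simp: U_def r'_def T_def)
  have difU: "d differentiable (at w)" if "w \<in> U" for w
  proof -
    have "w \<in> ball z r" using that by (auto simp: U_def r'_def)
    then have "w \<notin> singular_set \<Omega>" using r(2) closure_subset by blast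
    then show ?thesis using that UO unfolding singular_set_def by auto
  qed
  define s where "s = min (r' / 2) (T / 2)"
  have s: "s > 0" "s < r'" "s \<le> T / 2" using r' T by (auto simp: s_def)
  have cbU: "cball z s \<subseteq> U" using s by (auto simp: U_def)
  define \<Phi> where "\<Phi> = (\<lambda>w. z + s *\<^sub>R ((1 / d w) *\<^sub>R (w - pr w)))"
  have dpos: "w \<in> cball z s \<Longrightarrow> d w > 0" for w
  proof -
    assume "w \<in> cball z s"
    then have "w \<in> \<Omega>" using cbU UO by blast
    then show ?thesis by (rule d_pos)
  qed
  have cont: "continuous_on (cball z s) \<Phi>"
    unfolding \<Phi>_def
    by (intro continuous_intros d_cont continuous_on_subset[OF pr_cont[OF UO difU] cbU])
       (use dpos in force)
  have maps: "\<Phi> \<in> cball z s \<rightarrow> cball z s"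
  proof
    fix w assume w: "w \<in> cball z s"
    have "norm ((1 / d w) *\<^sub>R (w - pr w)) = 1"
      using dpos[OF w] pr(2)[of w] by (simp add: dist_norm)
    then show "\<Phi> w \<in> cball z s" using s by (simp add: \<Phi>_def dist_norm)
  qed
  obtain w where w: "w \<in> cball z s" and fxd: "\<Phi> w = w"
    using brouwer_ball[OF s(1) cont maps] by blast
  define q where "q = pr w"
  define D where "D = d w"
  have D: "D > 0" using dpos[OF w] by (simp add: D_def)
  have wO: "w \<in> \<Omega>" using w cbU UO by auto
  have wq: "D = dist w q" using pr(2) by (simp add: D_def q_def)
  have qF: "q \<in> F" using pr(1) by (simp add: q_def)
  have wz: "w = z + (s / D) *\<^sub>R (w - q)" using fxd by (simp add: \<Phi>_def D_def q_def)
  have "D \<ge> T - s" using d_lip'[of z w] w by (simp add: D_def T_def dist_commute)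
  then have sD: "s / D \<le> 1" using s D by (simp add: divide_le_eq)
  have zeq: "z = w + (s / D) *\<^sub>R (q - w)"
    using wz by (simp add: algebra_simps)
  have dz: "d z = (1 - s / D) * D"
    unfolding zeq using segment[OF qF, of w "s / D"] wq s(1) D sD by (simp add: D_def)
  then have DT: "D = T + s" using D by (simp add: T_def algebra_simps)
  have "dist z q = (1 - s / D) * dist w q"
  proof -
    have "z - q = (1 - s / D) *\<^sub>R (w - q)" using zeq by (simp add: algebra_simps)
    then show ?thesis using sD by (simp add: dist_norm)
  qed
  then have "d z = dist z q" using dz wq by simp
  then have qy: "q = y" using proj_unique[OF z(1) difU[of z] qF _ y] s(1) r' by (simp add: U_def)
  have "w - y = ((T + s) / T) *\<^sub>R (z - y)"
  proof -
    have "z - y = (1 - s / D) *\<^sub>R (w - y)" using zeq qy by (simp add: algebra_simps)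
    also have "1 - s / D = T / D" using DT D by (simp add: field_simps)
    finally have "z - y = (T / D) *\<^sub>R (w - y)" .
    then have "(D / T) *\<^sub>R (z - y) = w - y" using T D by simp
    then show ?thesis using DT by simp
  qed
  then have weq: "w = y + ((d z + s) / d z) *\<^sub>R (z - y)" by (simp add: T_def algebra_simps)
  show ?thesis
    using s(1) wO DT weq by (intro exI[of _ s]) (auto simp: D_def T_def)
qed

end

context domc begin

lemma ray_to_M:
  assumes cut: "cut_locus \<Omega> = high_ridge \<Omega>" and x0: "x0 \<in> \<Omega>"
  shows "\<exists>z\<in>\<Omega>. d z = \<rho> \<and> dist x0 z = \<rho> - d x0"
proof -
  obtain y where y: "y \<in> F" "d x0 = dist x0 y" by (rule proj)
  define d0 where "d0 = d x0"
  have d0: "d0 > 0" using d_pos[OF x0] by (simp add: d0_def)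
  have nxy: "norm (x0 - y) = d0" using y by (simp add: d0_def dist_norm)
  define P where "P = (\<lambda>t. y + (t / d0) *\<^sub>R (x0 - y))"
  have Pd0: "P d0 = x0" using d0 by (simp add: P_def)
  have distP: "dist (P t) y = t" if "t \<ge> 0" for t
    using that d0 nxy by (simp add: P_def dist_norm)
  have inO: "P t \<in> \<Omega>" if t: "t \<ge> d0" "d (P t) = t" for t
  proof (rule ccontr)
    assume nz: "P t \<notin> \<Omega>"
    have tpos: "t > 0" using t d0 by simp
    have yz: "d (P t) = dist (P t) y" using t distP tpos by simp
    have "closed_segment x0 (P t) \<inter> F \<noteq> {}"
      by (rule connected_Int_frontier) (use x0 nz in auto)
    then obtain w where w: "w \<in> closed_segment x0 (P t)" "w \<in> F" by auto
    then obtain l where l: "0 \<le> l" "l \<le> 1" "w = (1 - l) *\<^sub>R x0 + l *\<^sub>R P t"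
      unfolding closed_segment_def by auto
    define \<mu> where "\<mu> = (1 - l) * (1 - d0 / t)"
    have x0eq: "x0 = P t + (1 - d0 / t) *\<^sub>R (y - P t)"
      using tpos d0 by (simp add: P_def algebra_simps)
    have weq: "w = P t + \<mu> *\<^sub>R (y - P t)"
      unfolding l(3) \<mu>_def by (subst (1) x0eq) (simp add: algebra_simps)
    have \<mu>: "0 \<le> \<mu>" "\<mu> < 1"
    proof -
      have a: "0 \<le> 1 - d0 / t" "1 - d0 / t < 1" using t d0 tpos by (auto simp: divide_le_eq)
      show "0 \<le> \<mu>" unfolding \<mu>_def using a l by simp
      have "\<mu> \<le> 1 - d0 / t" unfolding \<mu>_def using a l by (simp add: mult_left_le_one_le)
      then show "\<mu> < 1" using a by simp
    qed
    have "d w = (1 - \<mu>) * d (P t)"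
      unfolding weq by (rule segment[OF y(1) yz]) (use \<mu> in auto)
    then have "d w > 0" using \<mu> t tpos by simp
    then show False using d_F[OF w(2)] by simp
  qed
  define S where "S = {t. d0 \<le> t \<and> t \<le> \<rho> \<and> d (P t) = t}"
  have d0S: "d0 \<in> S" using Pd0 d_le_rho[of x0] x0 closure_subset by (auto simp: S_def d0_def)
  have bdd: "bdd_above S" by (auto simp: S_def bdd_above_def)
  have contP: "continuous_on UNIV (\<lambda>t. d (P t))"
    unfolding P_def dist_bd_def using d0 by (intro continuous_intros) auto
  have clS: "closed S"
  proof -
    have "S = {d0..\<rho>} \<inter> {t. d (P t) = t}" by (auto simp: S_def)
    moreover have "closed {t. d (P t) = t}"
      by (intro closed_Collect_eq continuous_intros contP)
    ultimately show ?thesis by auto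
  qed
  define T where "T = Sup S"
  have TS: "T \<in> S" unfolding T_def using clS d0S bdd by (intro closed_contains_Sup) auto
  have T: "d0 \<le> T" "T \<le> \<rho>" "d (P T) = T" using TS by (auto simp: S_def)
  have Trho: "T = \<rho>"
  proof (rule ccontr)
    assume "T \<noteq> \<rho>"
    then have lt: "T < \<rho>" using T by simp
    define z where "z = P T"
    have zO: "z \<in> \<Omega>" using inO[OF T(1) T(3)] by (simp add: z_def)
    have Tpos: "T > 0" using T d0 by simp
    have dz: "d z = T" using T by (simp add: z_def)
    have zy: "d z = dist z y" using distP[of T] Tpos dz by (simp add: z_def)
    obtain s where s: "s > 0" and ws: "y + ((d z + s) / d z) *\<^sub>R (z - y) \<in> \<Omega>"
      and dws: "d (y + ((d z + s) / d z) *\<^sub>R (z - y)) = d z + s"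
      using ray_extend[OF cut zO _ y(1) zy] lt dz by auto
    have zy2: "z - y = (T / d0) *\<^sub>R (x0 - y)" by (simp add: z_def P_def)
    have "y + ((d z + s) / d z) *\<^sub>R (z - y) = y + (((T + s) / T) * (T / d0)) *\<^sub>R (x0 - y)"
      unfolding dz zy2 by simp
    also have "((T + s) / T) * (T / d0) = (T + s) / d0" using Tpos by simp
    finally have "y + ((d z + s) / d z) *\<^sub>R (z - y) = P (T + s)" by (simp add: P_def)
    then have Pin: "P (T + s) \<in> \<Omega>" and dP: "d (P (T + s)) = T + s" using ws dws dz by auto
    have "T + s \<le> \<rho>" using d_le_rho[of "P (T + s)"] Pin closure_subset dP by auto
    then have "T + s \<in> S" using dP T s by (auto simp: S_def)
    then have "T + s \<le> T" unfolding T_def using bdd by (rule cSup_upper)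
    then show False using s by simp
  qed
  have zO: "P \<rho> \<in> \<Omega>" using inO[OF T(1) T(3)] Trho by simp
  have "dist x0 (P \<rho>) = \<rho> - d0"
  proof -
    have e1: "(\<rho> - d0) / d0 = \<rho> / d0 - 1" using d0 by (simp add: field_simps)
    have "P \<rho> - x0 = (\<rho> / d0 - 1) *\<^sub>R (x0 - y)"
      by (simp add: P_def algebra_simps)
    then have "P \<rho> - x0 = ((\<rho> - d0) / d0) *\<^sub>R (x0 - y)" by (simp only: e1)
    then have "norm (P \<rho> - x0) = \<bar>(\<rho> - d0) / d0\<bar> * d0" using nxy by simp
    also have "\<dots> = \<rho> - d0" using d0 T Trho by simp
    finally show ?thesis by (simp add: dist_norm norm_minus_commute)
  qed
  then show ?thesis using zO T Trho by (intro bexI[of _ "P \<rho>"]) (auto simp: d0_def)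
qed

end

context dom begin

lemma const_test:
  assumes sup: "visc_supersol \<Omega> u" and x0: "x0 \<in> \<Omega>"
    and mx: "local_max_at \<Omega> (\<lambda>x. c - u x) x0"
  shows False
proof -
  have C2: "C2_on \<Omega> (\<lambda>x. c) (\<lambda>x. 0) (\<lambda>x h. 0)"
    unfolding C2_on_def by (auto intro!: derivative_eq_intros)
  have "- inf_lap (\<lambda>x. 0) (\<lambda>x h. 0) x0 \<ge> 1"
    using sup C2 x0 mx unfolding visc_supersol_def by blast
  then show False by (simp add: inf_lap_def)
qed

lemma u_nonneg:
  assumes u: "dirichlet_visc_sol \<Omega> u"
  shows "\<forall>x\<in>closure \<Omega>. u x \<ge> 0"
proof (rule ccontr)
  assume "\<not> ?thesis"
  then obtain x where x: "x \<in> closure \<Omega>" "u x < 0" by force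
  have ucont: "continuous_on (closure \<Omega>) u" and u0: "\<And>x. x \<in> F \<Longrightarrow> u x = 0"
    and usup: "visc_supersol \<Omega> u"
    using u unfolding dirichlet_visc_sol_def visc_sol_def by auto
  obtain x1 where x1: "x1 \<in> closure \<Omega>" and mn: "\<forall>z\<in>closure \<Omega>. u x1 \<le> u z"
    using continuous_attains_inf[OF closure_compact _ ucont] ne by auto
  have neg: "u x1 < 0" using mn x by force
  have x1O: "x1 \<in> \<Omega>"
  proof (rule closure_notF[OF x1])
    show "x1 \<notin> F" using neg u0 by force
  qed
  have "local_max_at \<Omega> (\<lambda>z. u x1 - u z) x1"
    unfolding local_max_at_def using mn closure_subset by (intro exI[of _ 1]) auto
  then show False by (rule const_test[OF usup x1O])
qed

lemma hoelder_const:
  fixes K :: real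
  assumes K: "K \<ge> 0" and eta: "\<eta> > 0"
    and H: "\<And>x c. x \<in> ball z \<eta> \<Longrightarrow> c \<in> ball z \<eta> \<Longrightarrow> u x \<ge> u c - K * norm (x - c) powr (4/3)"
  shows "\<exists>C. \<forall>x\<in>ball z \<eta>. u x = C"
proof (rule has_derivative_zero_constant[OF convex_ball])
  fix c assume c: "c \<in> ball z \<eta>"
  show "(u has_derivative (\<lambda>h. 0)) (at c within ball z \<eta>)"
    unfolding has_derivative_within_alt
  proof (intro conjI allI impI bounded_linear_zero)
    fix e :: real assume e: "e > 0"
    define dd where "dd = (e / (K + 1))^3"
    have dd: "dd > 0" using e K by (simp add: dd_def)
    show "\<exists>d>0. \<forall>y\<in>ball z \<eta>. norm (y - c) < d \<longrightarrow> norm (u y - u c - 0) \<le> e * norm (y - c)"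
    proof (intro exI[of _ dd] conjI ballI impI dd)
      fix y assume y: "y \<in> ball z \<eta>" and yd: "norm (y - c) < dd"
      have b: "\<bar>u y - u c\<bar> \<le> K * norm (y - c) powr (4/3)"
        using H[OF y c] H[OF c y] by (simp add: norm_minus_commute abs_le_iff)
      have "K * norm (y - c) powr (4/3) \<le> e * norm (y - c)"
      proof (cases "y = c")
        case True then show ?thesis by simp
      next
        case False
        let ?n = "norm (y - c)"
        have n: "?n > 0" using False by simp
        have "?n powr (1/3) < e / (K + 1)"
          using yd e K n by (intro cube_root_lt) (auto simp: dd_def)
        then have "K * ?n powr (1/3) \<le> e"
        proof -
          assume h: "?n powr (1/3) < e / (K + 1)"
          have "K * ?n powr (1/3) \<le> (K + 1) * ?n powr (1/3)" by (intro mult_right_mono) auto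
          also have "\<dots> \<le> (K + 1) * (e / (K + 1))" using h K by (intro mult_left_mono) auto
          finally show ?thesis using K by simp
        qed
        moreover have "?n powr (4/3) = ?n * ?n powr (1/3)"
        proof -
          have "?n powr (4/3) = ?n powr (1 + 1/3)" by simp
          also have "\<dots> = ?n powr 1 * ?n powr (1/3)" by (rule powr_add)
          finally show ?thesis using n by simp
        qed
        ultimately show ?thesis using n
          by (simp add: mult.commute mult.left_commute mult_left_mono)
      qed
      then show "norm (u y - u c - 0) \<le> e * norm (y - c)" using b by simp
    qed
  qed
qed

end

context dom begin

lemma barrier_min_center:
  assumes u: "dirichlet_visc_sol \<Omega> u" and unn: "\<forall>x\<in>closure \<Omega>. u x \<ge> 0"
    and cb: "cball c R \<subseteq> \<Omega>" and R: "R > 0" and mu: "0 < \<mu>" "\<mu> < 1"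
    and x1: "x1 \<in> cball c R"
    and mn: "\<forall>x\<in>cball c R. u x1 - \<mu> * fR R (R - norm (x1 - c)) \<le> u x - \<mu> * fR R (R - norm (x - c))"
    and neg: "u x1 - \<mu> * fR R (R - norm (x1 - c)) < 0"
  shows "x1 = c"
proof (rule ccontr)
  assume xc: "x1 \<noteq> c"
  have usup: "visc_supersol \<Omega> u" using u unfolding dirichlet_visc_sol_def visc_sol_def by auto
  define r1 where "r1 = norm (x1 - c)"
  have r1: "r1 > 0" using xc by (simp add: r1_def)
  have r1R: "r1 < R"
  proof (rule ccontr)
    assume "\<not> r1 < R"
    then have "r1 = R" using x1 by (simp add: r1_def dist_norm norm_minus_commute)
    then have "fR R (R - norm (x1 - c)) = 0" by (simp add: r1_def fR_def)
    moreover have "u x1 \<ge> 0" using unn x1 cb closure_subset by blast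
    ultimately show False using neg by simp
  qed
  have x1O: "x1 \<in> \<Omega>" using x1 cb by blast
  define g where "g = (\<lambda>r. \<mu> * fR R (R - r))"
  define g' where "g' = (\<lambda>r. - (\<mu> * fR1 R (R - r)))"
  define a1 where "a1 = \<mu> * fR1 R (R - r1)"
  have a1: "a1 > 0" using fR1_pos[of "R - r1" R] r1 mu by (simp add: a1_def)
  define \<delta> where "\<delta> = (1 - \<mu>^3) / (2 * a1^2)"
  have mu3: "\<mu>^3 < 1" using mu by (simp add: power_less_one_iff)
  have \<delta>: "\<delta> > 0" using mu3 a1 by (simp add: \<delta>_def)
  have dg: "(g has_real_derivative g' r) (at r)" if "r > 0" for r
  proof -
    have l: "((\<lambda>r. R - r) has_real_derivative -1) (at r)" by (auto intro!: derivative_eq_intros)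
    have "R - r < R" using that by simp
    from DERIV_cmult[OF DERIV_chain2[OF fR_deriv[OF this] l], of \<mu>]
    show ?thesis by (simp add: g_def g'_def)
  qed
  have dg2: "(g' has_real_derivative \<mu> * fR2 R (R - r1)) (at r1)"
  proof -
    have l: "((\<lambda>r. R - r) has_real_derivative -1) (at r1)" by (auto intro!: derivative_eq_intros)
    have "R - r1 < R" using r1 by simp
    from DERIV_minus[OF DERIV_cmult[OF DERIV_chain2[OF fR1_deriv[OF this] l], of \<mu>]]
    show ?thesis by (simp add: g'_def)
  qed
  obtain \<psi> G H where C2: "C2_on UNIV \<psi> G H" and p1: "\<psi> x1 = g r1"
    and e': "\<exists>e'>0. \<forall>x\<in>ball x1 e'. \<psi> x \<le> g (norm (x - c))"
    and lap: "inf_lap G H x1 = (g' r1)\<^sup>2 * (\<mu> * fR2 R (R - r1) - \<delta>)"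
  proof -
    have "\<exists>\<psi> G H. C2_on UNIV \<psi> G H \<and> \<psi> x1 = g (norm (x1 - c)) \<and>
       (\<exists>e'>0. \<forall>x\<in>ball x1 e'. \<psi> x \<le> g (norm (x - c))) \<and>
       inf_lap G H x1 = (g' (norm (x1 - c)))\<^sup>2 * (\<mu> * fR2 R (R - r1) - \<delta>)"
    proof (rule radial_test[OF xc, where e = r1])
      show "r1 > 0" by (fact r1)
      show "(g has_real_derivative g' r) (at r)" if "\<bar>r - norm (x1 - c)\<bar> < r1" for r
        using that by (intro dg) (auto simp: r1_def)
      show "(g' has_real_derivative \<mu> * fR2 R (R - r1)) (at (norm (x1 - c)))"
        using dg2 by (simp add: r1_def)
      show "\<delta> > 0" by (fact \<delta>)
    qed
    then show ?thesis using that unfolding r1_def by blast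
  qed
  obtain e' where e'pos: "e' > 0" and le: "\<forall>x\<in>ball x1 e'. \<psi> x \<le> g (norm (x - c))" using e' by blast
  define C where "C = u x1 - \<psi> x1"
  have C2': "C2_on \<Omega> (\<lambda>x. \<psi> x + C) G H" by (rule C2_shift[OF C2])
  have lm: "local_max_at \<Omega> (\<lambda>x. (\<psi> x + C) - u x) x1"
    unfolding local_max_at_def
  proof (intro exI[of _ "min e' (R - r1)"] conjI ballI)
    show "min e' (R - r1) > 0" using e'pos r1R by simp
    fix w assume w: "w \<in> \<Omega> \<inter> ball x1 (min e' (R - r1))"
    have "norm (w - c) \<le> norm (x1 - c) + norm (w - x1)" using norm_triangle_ineq[of "w - x1" "x1 - c"] by simp
    moreover have "norm (w - x1) < R - r1" using w by (simp add: dist_norm norm_minus_commute)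
    ultimately have "norm (w - c) \<le> R" unfolding r1_def by linarith
    then have wc: "w \<in> cball c R" by (simp add: dist_norm norm_minus_commute)
    have "\<psi> w \<le> g (norm (w - c))" using le w by auto
    moreover have "u x1 - g r1 \<le> u w - g (norm (w - c))" using mn wc by (simp add: g_def r1_def)
    ultimately show "(\<psi> w + C) - u w \<le> (\<psi> x1 + C) - u x1" using p1 by (simp add: C_def)
  qed
  have "- inf_lap G H x1 \<ge> 1"
    using usup C2' x1O lm unfolding visc_supersol_def by blast
  moreover have "inf_lap G H x1 = - (\<mu>^3) - a1^2 * \<delta>"
  proof -
    have "inf_lap G H x1 = \<mu>^3 * ((fR1 R (R - r1))^2 * fR2 R (R - r1)) - a1^2 * \<delta>"
      using lap by (simp add: g'_def a1_def algebra_simps power2_eq_square power3_eq_cube)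
    then show ?thesis using fR_identity[of "R - r1" R] r1 by simp
  qed
  moreover have "a1^2 * \<delta> = (1 - \<mu>^3) / 2" using a1 by (simp add: \<delta>_def)
  ultimately have "\<mu>^3 + (1 - \<mu>^3) / 2 \<ge> 1" by simp
  then have "\<mu>^3 \<ge> 1" by (simp add: field_simps)
  then show False using mu3 by simp
qed

end

context dom begin

lemma fR_ball: "fR R (R - n) = c0 * (R powr (4/3) - n powr (4/3))"
  by (simp add: fR_def)

lemma barrier:
  assumes u: "dirichlet_visc_sol \<Omega> u" and unn: "\<forall>x\<in>closure \<Omega>. u x \<ge> 0"
    and zb: "ball z r0 \<subseteq> \<Omega>" and R: "R > 0" and eps: "\<epsilon> > 0" "R + \<epsilon> \<le> r0"
    and mu: "0 < \<mu>" "\<mu> < 1"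
  shows "\<exists>c\<in>ball z \<epsilon>. \<forall>x\<in>cball c R. u x \<ge> \<mu> * fR R (R - norm (x - c))"
proof (rule ccontr)
  assume nb: "\<not> ?thesis"
  have ucont: "continuous_on (closure \<Omega>) u" and usup: "visc_supersol \<Omega> u"
    using u unfolding dirichlet_visc_sol_def visc_sol_def by auto
  have hold: "u x \<ge> u c - \<mu> * c0 * norm (x - c) powr (4/3)" if c: "c \<in> ball z \<epsilon>" and x: "x \<in> cball c R" for c x
  proof -
    have cb: "cball c R \<subseteq> \<Omega>"
    proof
      fix w assume w: "w \<in> cball c R"
      have "dist z w \<le> dist z c + dist c w" by (rule dist_triangle)
      also have "\<dots> < r0" using c w eps by simp
      finally show "w \<in> \<Omega>" using zb by auto
    qed
    have contB: "continuous_on (cball c R) (\<lambda>x. u x - \<mu> * fR R (R - norm (x - c)))"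
      unfolding fR_ball
      by (intro continuous_intros continuous_on_subset[OF ucont] continuous_on_powr')
         (use cb closure_subset in auto)
    obtain x1 where x1: "x1 \<in> cball c R"
      and mn: "\<forall>x\<in>cball c R. u x1 - \<mu> * fR R (R - norm (x1 - c)) \<le> u x - \<mu> * fR R (R - norm (x - c))"
      using continuous_attains_inf[OF compact_cball _ contB] R by auto
    obtain xb where xb: "xb \<in> cball c R" "u xb < \<mu> * fR R (R - norm (xb - c))" using nb c by force
    have neg: "u x1 - \<mu> * fR R (R - norm (x1 - c)) < 0" using mn xb by force
    have "x1 = c" by (rule barrier_min_center[OF u unn cb R mu x1 mn neg])
    then have "u c - \<mu> * fR R R \<le> u x - \<mu> * fR R (R - norm (x - c))" using mn x by force
    then show ?thesis by (simp add: fR_ball fR_top algebra_simps)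
  qed
  define \<eta> where "\<eta> = min \<epsilon> (R / 2)"
  have \<eta>: "\<eta> > 0" using eps R by (simp add: \<eta>_def)
  have "\<exists>C. \<forall>x\<in>ball z \<eta>. u x = C"
  proof (rule hoelder_const[OF _ \<eta>])
    show "\<mu> * c0 \<ge> 0" using mu c0_pos by simp
    fix x c assume x: "x \<in> ball z \<eta>" and c: "c \<in> ball z \<eta>"
    have "dist c x \<le> dist c z + dist z x" by (rule dist_triangle)
    also have "\<dots> \<le> R" using x c by (simp add: \<eta>_def dist_commute)
    finally have "x \<in> cball c R" by simp
    moreover have "c \<in> ball z \<epsilon>" using c by (simp add: \<eta>_def)
    ultimately show "u x \<ge> u c - \<mu> * c0 * norm (x - c) powr (4/3)" using hold by blast
  qed
  then obtain C where C: "\<forall>x\<in>ball z \<eta>. u x = C" by blast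
  have r0: "r0 > 0" using R eps by simp
  have zO: "z \<in> \<Omega>" using zb r0 by auto
  have "local_max_at \<Omega> (\<lambda>x. u z - u x) z"
    unfolding local_max_at_def using C \<eta> by (intro exI[of _ \<eta>]) auto
  then show False by (rule const_test[OF usup zO])
qed

end

context domc begin

lemma u_ge_phi:
  assumes cut: "cut_locus \<Omega> = high_ridge \<Omega>" and u: "dirichlet_visc_sol \<Omega> u" and x0: "x0 \<in> \<Omega>"
  shows "u x0 \<ge> fR \<rho> (d x0)"
proof -
  have unn: "\<forall>x\<in>closure \<Omega>. u x \<ge> 0" by (rule u_nonneg[OF u])
  obtain z where zO: "z \<in> \<Omega>" and dz: "d z = \<rho>" and xz: "dist x0 z = \<rho> - d x0"
    using ray_to_M[OF cut x0] by blast
  have zb: "ball z \<rho> \<subseteq> \<Omega>" using ball_sub[OF zO] dz by simp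
  define d0 where "d0 = d x0"
  have d0: "d0 > 0" "d0 \<le> \<rho>" using d_pos[OF x0] d_le_rho[of x0] x0 closure_subset by (auto simp: d0_def)
  define t where "t = (\<lambda>n::nat. inverse (real (Suc n)))"
  have t0: "t \<longlonglongrightarrow> 0" unfolding t_def by (rule LIMSEQ_inverse_real_of_nat)
  have tpos: "t n > 0" and tle: "t n \<le> 1" for n by (auto simp: t_def field_simps)
  define mu where "mu = (\<lambda>n. 1 - t n / 2)"
  define R where "R = (\<lambda>n. \<rho> - d0 * t n / 4)"
  define ep where "ep = (\<lambda>n. d0 * t n / 4)"
  define X where "X = (\<lambda>n. mu n * (c0 * (R n powr (4/3) - (\<rho> - d0 + ep n) powr (4/3))))"
  have bound: "X n \<le> u x0" for n
  proof -
    have Rn: "R n > 0"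
    proof -
      have "d0 * t n \<le> d0 * 1" using d0 tle[of n] by (intro mult_left_mono) auto
      then have "d0 * t n / 4 < \<rho>" using d0 rho_pos by linarith
      then show ?thesis by (simp add: R_def)
    qed
    have epn: "ep n > 0" using d0 tpos[of n] by (simp add: ep_def)
    have mun: "0 < mu n" "mu n < 1" using tpos[of n] tle[of n] by (auto simp: mu_def)
    have sum: "R n + ep n \<le> \<rho>" by (simp add: R_def ep_def)
    obtain c where c: "c \<in> ball z (ep n)" and cb: "\<forall>x\<in>cball c (R n). u x \<ge> mu n * fR (R n) (R n - norm (x - c))"
      using barrier[OF u unn zb Rn epn sum mun] by blast
    have "norm (x0 - c) \<le> dist x0 z + dist z c" by (metis dist_norm dist_triangle)
    also have "\<dots> < \<rho> - d0 + ep n" using xz c by (simp add: d0_def)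
    finally have nx: "norm (x0 - c) < \<rho> - d0 + ep n" .
    have "\<rho> - d0 + ep n \<le> R n"
    proof -
      have "d0 * t n \<le> d0 * 1" using d0 tle[of n] by (intro mult_left_mono) auto
      then show ?thesis using d0 by (simp add: R_def ep_def)
    qed
    then have "x0 \<in> cball c (R n)" using nx by (simp add: dist_norm norm_minus_commute)
    then have ux: "u x0 \<ge> mu n * (c0 * (R n powr (4/3) - norm (x0 - c) powr (4/3)))"
      using cb fR_ball by metis
    have "norm (x0 - c) powr (4/3) \<le> (\<rho> - d0 + ep n) powr (4/3)"
      using nx by (intro powr_mono2) auto
    then have "mu n * (c0 * (R n powr (4/3) - (\<rho> - d0 + ep n) powr (4/3)))
        \<le> mu n * (c0 * (R n powr (4/3) - norm (x0 - c) powr (4/3)))"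
      using mun c0_pos by (intro mult_left_mono) auto
    then show ?thesis using ux by (simp add: X_def)
  qed
  have lmu: "mu \<longlonglongrightarrow> 1 - 0 / 2" unfolding mu_def by (intro tendsto_intros t0) simp_all
  have lR: "R \<longlonglongrightarrow> \<rho> - d0 * 0 / 4" unfolding R_def by (intro tendsto_intros t0) simp_all
  have lE: "(\<lambda>n. \<rho> - d0 + ep n) \<longlonglongrightarrow> \<rho> - d0 + d0 * 0 / 4" unfolding ep_def by (intro tendsto_intros t0) simp_all
  have a: "(\<lambda>n. R n powr (4/3)) \<longlonglongrightarrow> (\<rho> - d0 * 0 / 4) powr (4/3)"
    by (rule tendsto_powr'[OF lR tendsto_const]) (use rho_pos in simp)
  have ev: "\<forall>\<^sub>F n in sequentially. 0 \<le> \<rho> - d0 + ep n"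
  proof (intro always_eventually allI)
    fix n show "0 \<le> \<rho> - d0 + ep n" using d0 tpos[of n] by (simp add: ep_def)
  qed
  have b: "(\<lambda>n. (\<rho> - d0 + ep n) powr (4/3)) \<longlonglongrightarrow> (\<rho> - d0 + d0 * 0 / 4) powr (4/3)"
    by (rule tendsto_powr'[OF lE tendsto_const]) (use ev in simp)
  have "X \<longlonglongrightarrow> (1 - 0 / 2) * (c0 * ((\<rho> - d0 * 0 / 4) powr (4/3) - (\<rho> - d0 + d0 * 0 / 4) powr (4/3)))"
    unfolding X_def by (intro tendsto_mult tendsto_const tendsto_diff lmu a b)
  then have "(1 - 0 / 2) * (c0 * ((\<rho> - d0 * 0 / 4) powr (4/3) - (\<rho> - d0 + d0 * 0 / 4) powr (4/3))) \<le> u x0"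
    by (rule LIMSEQ_le_const2) (use bound in auto)
  then show ?thesis by (simp add: fR_def d0_def)
qed

end

context dom begin

lemma dist_ratio:
  assumes nu: "inner_normal \<Omega> p \<nu>"
  shows "((\<lambda>t. d (p + t *\<^sub>R \<nu>) / t) \<longlongrightarrow> 1) (at_right 0)"
proof -
  obtain r \<psi> D\<psi> where pF: "p \<in> F" and r: "r > 0"
    and dpsi: "\<forall>x\<in>ball p r. (\<psi> has_derivative (\<lambda>h. D\<psi> x \<bullet> h)) (at x)"
    and nz: "\<forall>x\<in>ball p r. D\<psi> x \<noteq> 0"
    and eqO: "\<Omega> \<inter> ball p r = {x \<in> ball p r. \<psi> x > 0}"
    and nuv: "\<nu> = D\<psi> p /\<^sub>R norm (D\<psi> p)"
    using nu unfolding inner_normal_def by blast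
  have pb: "p \<in> ball p r" using r by simp
  have dp: "(\<psi> has_derivative (\<lambda>h. D\<psi> p \<bullet> h)) (at p)" using dpsi pb by blast
  define a where "a = norm (D\<psi> p)"
  have a: "a > 0" using nz pb by (simp add: a_def)
  have nun: "norm \<nu> = 1" using a by (simp add: nuv a_def)
  have nuD: "\<nu> \<bullet> v = (D\<psi> p \<bullet> v) / a" for v by (simp add: nuv a_def field_simps)
  have psi_le: "\<psi> x \<le> 0" if "x \<in> ball p r" "x \<notin> \<Omega>" for x
  proof (rule ccontr)
    assume "\<not> \<psi> x \<le> 0"
    then have "x \<in> {x \<in> ball p r. \<psi> x > 0}" using that by simp
    then have "x \<in> \<Omega>" using eqO by blast
    with that show False by simp
  qed
  have psip0: "\<psi> p = 0"
  proof -
    have le: "\<psi> p \<le> 0" using psi_le[OF pb F_notin[OF pF]] .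
    have "\<psi> p \<ge> 0"
    proof (rule ccontr)
      assume "\<not> \<psi> p \<ge> 0"
      then have neg: "\<psi> p < 0" by simp
      have "continuous (at p) \<psi>" using dp by (rule has_derivative_continuous)
      then obtain \<rho>' where \<rho>': "\<rho>' > 0" "\<forall>x. dist x p < \<rho>' \<longrightarrow> dist (\<psi> x) (\<psi> p) < - \<psi> p"
        unfolding continuous_at_eps_delta using neg by (metis neg_0_less_iff_less)
      have "p \<in> closure \<Omega>" using pF by (simp add: frontier_def)
      then obtain x where x: "x \<in> \<Omega>" "dist x p < min \<rho>' r"
        using closure_approachable[of p \<Omega>] \<rho>' r by (metis min_less_iff_conj)
      have "\<psi> x < 0" using \<rho>'(2)[rule_format, of x] x by (auto simp: dist_real_def)
      moreover have "x \<in> \<Omega> \<inter> ball p r" using x by (auto simp: dist_commute)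
      ultimately show False using eqO by auto
    qed
    with le show ?thesis by simp
  qed
  have lin: "\<forall>e>0. \<exists>\<delta>>0. \<forall>y. norm (y - p) < \<delta> \<longrightarrow> norm (\<psi> y - \<psi> p - D\<psi> p \<bullet> (y - p)) \<le> e * norm (y - p)"
    using dp unfolding has_derivative_at_alt by blast
  show ?thesis
    unfolding tendsto_iff
  proof (intro allI impI)
    fix \<epsilon> :: real assume \<epsilon>: "\<epsilon> > 0"
    obtain \<delta> where \<delta>: "\<delta> > 0" and \<delta>': "\<forall>y. norm (y - p) < \<delta> \<longrightarrow> norm (\<psi> y - \<psi> p - D\<psi> p \<bullet> (y - p)) \<le> (\<epsilon> * a / 4) * norm (y - p)"
      using lin \<epsilon> a by (metis divide_pos_pos mult_pos_pos zero_less_numeral)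
    show "\<forall>\<^sub>F t in at_right 0. dist (d (p + t *\<^sub>R \<nu>) / t) 1 < \<epsilon>"
      unfolding eventually_at_right_field
    proof (intro exI[of _ "min (\<delta>/2) (r/2)"] conjI allI impI)
      show "(0::real) < min (\<delta>/2) (r/2)" using \<delta> r by simp
      fix t :: real assume t0: "0 < t" and t1: "t < min (\<delta>/2) (r/2)"
      have t: "0 < t \<and> t < min (\<delta>/2) (r/2)" using t0 t1 by simp
      define x where "x = p + t *\<^sub>R \<nu>"
      obtain q where q: "q \<in> F" "d x = dist x q" by (rule proj)
      have xp: "dist x p = t" using t nun by (simp add: x_def dist_norm)
      have dxle: "d x \<le> t" using d_le_dist[OF pF, of x] xp by simp
      have "norm (q - p) \<le> dist q x + dist x p" by (metis dist_norm dist_triangle)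
      also have "\<dots> \<le> 2 * t" using q dxle xp by (simp add: dist_commute)
      finally have qp: "norm (q - p) \<le> 2 * t" .
      have qb: "q \<in> ball p r" using qp t by (simp add: dist_norm norm_minus_commute)
      have qd: "norm (q - p) < \<delta>" using qp t by simp
      have "\<psi> q \<le> 0" using psi_le[OF qb F_notin[OF q(1)]] .
      moreover have "D\<psi> p \<bullet> (q - p) \<le> \<psi> q - \<psi> p + (\<epsilon> * a / 4) * norm (q - p)"
      proof -
        have ab: "norm (\<psi> q - \<psi> p - D\<psi> p \<bullet> (q - p)) \<le> (\<epsilon> * a / 4) * norm (q - p)"
          using \<delta>' qd by blast
        have "- (\<psi> q - \<psi> p - D\<psi> p \<bullet> (q - p)) \<le> norm (\<psi> q - \<psi> p - D\<psi> p \<bullet> (q - p))"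
          by simp
        with ab show ?thesis by linarith
      qed
      ultimately have "D\<psi> p \<bullet> (q - p) \<le> (\<epsilon> * a / 4) * (2 * t)"
        using psip0 qp \<epsilon> a by (smt (verit) mult_left_mono zero_le_divide_iff mult_pos_pos)
      then have nq: "\<nu> \<bullet> (q - p) \<le> \<epsilon> * t / 2"
        using a by (simp add: nuD divide_le_eq field_simps)
      have "\<nu> \<bullet> (x - q) \<le> norm \<nu> * norm (x - q)" by (rule norm_cauchy_schwarz)
      then have "\<nu> \<bullet> (x - q) \<le> d x" using q nun by (simp add: dist_norm)
      moreover have "\<nu> \<bullet> (x - q) = t - \<nu> \<bullet> (q - p)"
        using nun by (simp add: x_def inner_diff_right power2_norm_eq_inner[symmetric] algebra_simps)
      ultimately have "d x \<ge> t - \<epsilon> * t / 2" using nq by linarith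
      then have "d x / t \<ge> 1 - \<epsilon> / 2" using t by (simp add: field_simps)
      moreover have "d x / t \<le> 1" using dxle t by simp
      ultimately show "dist (d (p + t *\<^sub>R \<nu>) / t) 1 < \<epsilon>"
        using \<epsilon> by (simp add: x_def[symmetric] dist_real_def)
    qed
  qed
qed

lemma normal_deriv:
  assumes nu: "inner_normal \<Omega> p \<nu>"
  shows "((\<lambda>t. (fR \<rho> (d (p + t *\<^sub>R \<nu>)) - fR \<rho> (d p)) / t) \<longlongrightarrow> (3 * \<rho>) powr (1/3)) (at_right 0)"
proof -
  have pF: "p \<in> F" using nu unfolding inner_normal_def by blast
  define dt where "dt = (\<lambda>t. d (p + t *\<^sub>R \<nu>))"
  have rat: "((\<lambda>t. dt t / t) \<longlongrightarrow> 1) (at_right 0)" using dist_ratio[OF nu] by (simp add: dt_def)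
  have ev: "eventually (\<lambda>t. dt t / t > 1/2) (at_right 0)"
  proof -
    have "(1/2::real) < 1" by simp
    from order_tendstoD(1)[OF rat this] show ?thesis .
  qed
  have evpos: "eventually (\<lambda>t. dt t \<noteq> 0) (at_right 0)"
  proof -
    have "eventually (\<lambda>t. t > 0) (at_right (0::real))" by (simp add: eventually_at_right_less)
    with ev show ?thesis by eventually_elim (auto simp: field_simps)
  qed
  have t0: "((\<lambda>t::real. t) \<longlongrightarrow> 0) (at_right 0)" by (rule tendsto_ident_at)
  have "((\<lambda>t. dt t / t * t) \<longlongrightarrow> 1 * 0) (at_right 0)" by (intro tendsto_mult rat t0)
  moreover have "eventually (\<lambda>t. dt t / t * t = dt t) (at_right (0::real))"
  proof -
    have "eventually (\<lambda>t. t > (0::real)) (at_right 0)" by (simp add: eventually_at_right_less)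
    then show ?thesis by eventually_elim simp
  qed
  ultimately have "(dt \<longlongrightarrow> 1 * 0) (at_right 0)"
    by (rule Lim_transform_eventually)
  then have dt0: "(dt \<longlongrightarrow> 0) (at_right 0)" by simp
  have fil: "filterlim dt (at 0) (at_right 0)"
    unfolding filterlim_at using dt0 evpos by simp
  have "((\<lambda>h. (fR \<rho> (0 + h) - fR \<rho> 0) / h) \<longlongrightarrow> fR1 \<rho> 0) (at 0)"
    using fR_deriv[of 0 \<rho>] rho_pos by (simp add: DERIV_def)
  then have g: "((\<lambda>s. fR \<rho> s / s) \<longlongrightarrow> fR1 \<rho> 0) (at 0)" by simp
  have "((\<lambda>t. fR \<rho> (dt t) / dt t) \<longlongrightarrow> fR1 \<rho> 0) (at_right 0)"
    by (rule filterlim_compose[OF g fil])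
  then have "((\<lambda>t. fR \<rho> (dt t) / dt t * (dt t / t)) \<longlongrightarrow> fR1 \<rho> 0 * 1) (at_right 0)"
    by (intro tendsto_mult rat)
  moreover have "eventually (\<lambda>t. fR \<rho> (dt t) / dt t * (dt t / t) = (fR \<rho> (d (p + t *\<^sub>R \<nu>)) - fR \<rho> (d p)) / t) (at_right 0)"
    using evpos by eventually_elim (simp add: dt_def d_F[OF pF])
  ultimately have "((\<lambda>t. (fR \<rho> (d (p + t *\<^sub>R \<nu>)) - fR \<rho> (d p)) / t) \<longlongrightarrow> fR1 \<rho> 0 * 1) (at_right 0)"
    by (rule Lim_transform_eventually)
  then have lim: "((\<lambda>t. (fR \<rho> (d (p + t *\<^sub>R \<nu>)) - fR \<rho> (d p)) / t) \<longlongrightarrow> fR1 \<rho> 0) (at_right 0)"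
    by simp
  have "fR1 \<rho> 0 = (3 * \<rho>) powr (1/3)"
  proof -
    have e: "(4/3::real) = 1 + 1/3" by simp
    have "(3::real) powr (4/3) = 3 powr (1 + 1/3)" by (simp only: e)
    also have "\<dots> = 3 powr 1 * 3 powr (1/3)" by (rule powr_add)
    finally have h: "(3::real) powr (4/3) = 3 * 3 powr (1/3)" by simp
    have c: "c0 * (4/3) = 3 powr (1/3)" unfolding c0_def h by simp
    have "fR1 \<rho> 0 = 3 powr (1/3) * \<rho> powr (1/3)" unfolding fR1_def c by simp
    also have "\<dots> = (3 * \<rho>) powr (1/3)" using rho_pos by (simp add: powr_mult)
    finally show ?thesis .
  qed
  then show ?thesis using lim by simp
qed

end

theorem theorem2:
  fixes \<Omega> :: "(real ^ 'n) set"
  assumes "open \<Omega>" and "bounded \<Omega>" and "connected \<Omega>" and "\<Omega> \<noteq> {}"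
    and "cut_locus \<Omega> = high_ridge \<Omega>"
  shows "dirichlet_visc_sol \<Omega> (phi_Omega \<Omega>) \<and>
         (\<forall>u. dirichlet_visc_sol \<Omega> u \<longrightarrow> (\<forall>x\<in>closure \<Omega>. u x = phi_Omega \<Omega> x)) \<and>
         (C1_boundary \<Omega> \<longrightarrow>
            overdet_visc_sol \<Omega> (phi_Omega \<Omega>) ((3 * inradius \<Omega>) powr (1/3)) \<and>
            (\<forall>u. overdet_visc_sol \<Omega> u ((3 * inradius \<Omega>) powr (1/3)) \<longrightarrow>
                 (\<forall>x\<in>closure \<Omega>. u x = phi_Omega \<Omega> x)))"
proof -
  have sing: "singular_set \<Omega> \<subseteq> high_ridge \<Omega>"
    using assms(5) closure_subset unfolding cut_locus_def by blast
  interpret domc \<Omega>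
    by unfold_locales (use assms sing in auto)
  have D: "dirichlet_visc_sol \<Omega> (phi_Omega \<Omega>)" using phi_dirichlet phi_eq by simp
  have U: "\<forall>u. dirichlet_visc_sol \<Omega> u \<longrightarrow> (\<forall>x\<in>closure \<Omega>. u x = phi_Omega \<Omega> x)"
  proof (intro allI impI ballI)
    fix u x assume u: "dirichlet_visc_sol \<Omega> u" and x: "x \<in> closure \<Omega>"
    show "u x = phi_Omega \<Omega> x"
    proof (cases "x \<in> \<Omega>")
      case True
      have "u x \<le> fR (inradius \<Omega>) (dist_bd \<Omega> x)" by (rule u_le_phi[OF u x])
      moreover have "u x \<ge> fR (inradius \<Omega>) (dist_bd \<Omega> x)" by (rule u_ge_phi[OF assms(5) u True])
      ultimately show ?thesis using phi_eq by simp
    next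
      case False
      then have xF: "x \<in> frontier \<Omega>" using x assms(1) by (simp add: frontier_def interior_open)
      then have "u x = 0" using u unfolding dirichlet_visc_sol_def by blast
      moreover have "phi_Omega \<Omega> x = 0" using d_F[OF xF] phi_eq by simp
      ultimately show ?thesis by simp
    qed
  qed
  have N: "normal_deriv_eq \<Omega> (phi_Omega \<Omega>) ((3 * inradius \<Omega>) powr (1/3))"
    unfolding normal_deriv_eq_def phi_eq using normal_deriv by blast
  show ?thesis
    using D U N unfolding overdet_visc_sol_def by blast
qed


end
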